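(* Let $g\geq 2$. For pairwise distinct $\alpha,\beta,\gamma\in\{a_1,\dots,a_g,b_1,\dots,b_g\}$, the family $V_{\alpha,\beta,\gamma}=((V_{\alpha,\beta,\gamma})_c)_c\in\mathfrak t_{(g)}(2)^{\times 2g}$ defined by \[ (V_{\alpha,\beta,\gamma})_c=\begin{cases} -\langle\alpha,\alpha^*\rangle\big([z_\beta^{(1)},z_\gamma^{(1)}]+2\langle\beta,\gamma\rangle t_{11}\big) & c=\alpha^*,\\ \langle\beta,\beta^*\rangle\big([z_\alpha^{(1)},z_\gamma^{(1)}]+2\langle\alpha,\gamma\rangle t_{11}\big) & c=\beta^*,\\ -\langle\gamma,\gamma^*\rangle\big([z_\alpha^{(1)},z_\beta^{(1)}]+2\langle\alpha,\beta\rangle t_{11}\big) & c=\gamma^*,\\ 0 & \text{otherwise} \end{cases} \] lies in $Z_{(g)}$.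
   Context: $\mathbb K$ is a field of characteristic zero. On $\{a_1,\dots,a_g,b_1,\dots,b_g\}$ the pairing is $\langle a_i,b_i\rangle=-\langle b_i,a_i\rangle=-1$ and zero on other pairs; the Poincaré dual is $a_i^*=b_i$, $b_i^*=a_i$. For $c\in\{a_i,b_i\}$, $z_c^{(1)}\in\mathfrak t_{(g)}(2)$ denotes $x_i^{(1)}$ if $c=a_i$ and $y_i^{(1)}$ if $c=b_i$. For $n\ge1$, $\mathfrak t_{(g)}(n)$ is the Lie algebra generated by $x_l^{(i)},y_l^{(i)},t_{ij}$ ($1\le i,j\le n$, $1\le l\le g$) with relations: all $t_{ii}$ central; $t_{ij}=t_{ji}$; $[t_{ij},t_{kl}]=0$ for $i,j,k,l$ distinct; $[t_{ik}+t_{kj},t_{ij}]=0$ for $i,j,k$ distinct; $[x_l^{(i)},x_k^{(j)}]=[y_l^{(i)},y_k^{(j)}]=0$ for $i\ne j$; $[x_k^{(i)},y_l^{(j)}]=0$ for $i\neq j,k\neq l$; $[x_k^{(i)},y_k^{(j)}]=t_{ij}$ for $i\neq j$; $\sum_{k=1}^g[x_k^{(i)},y_k^{(i)}]=-\sum_{j\neq i}t_{ij}-(2-2g)t_{ii}$. For $\phi:\{1,\dots,m\}\to\{1,\dots,n\}$, $\theta\mapsto\theta^\phi$ is the Lie morphism with $t_{ij}\mapsto\sum_{i'\in\phi^{-1}(i),j'\in\phi^{-1}(j)}t_{i'j'}$ ($i\ne j$), $t_{ii}\mapsto\sum_{i'\in\phi^{-1}(i)}t_{i'i'}+\frac12\sum_{i'\ne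 j'\in\phi^{-1}(i)}t_{i'j'}$, $x_l^{(i)}\mapsto\sum_{i'\in\phi^{-1}(i)}x_l^{(i')}$, $y_l^{(i)}\mapsto\sum_{i'\in\phi^{-1}(i)}y_l^{(i')}$, written $\theta^{I_1,\dots,I_n}$ with $I_k=\phi^{-1}(k)$. $Z_{(g)}$ is the set of families $(U_c)_{c}\in\mathfrak t_{(g)}(2)^{\times 2g}$, $c\in\{a_1,\dots,b_g\}$, such that: for every $c$ there is $u_c\in\mathfrak t_{(g)}(1)$ with $u_c^{12}=U_c^{1,2}+U_c^{2,1}$; $U_c^{12,3}-U_c^{1,23}-U_c^{2,13}=0$ for all $c$; $[U_{a_i}^{1,23},y_j^{(2)}]-[U_{b_j}^{2,13},x_i^{(1)}]=0$ for all $i,j$; for $i<j$, $[U_{a_i}^{1,23},x_j^{(2)}]-[U_{a_j}^{2,13},x_i^{(1)}]=0$ and $[U_{b_i}^{1,23},y_j^{(2)}]-[U_{b_j}^{2,13},y_i^{(1)}]=0$; $\sum_{i=1}^g[U_{a_i}^{1,23},y_i^{(1)}]-[U_{b_i}^{1,23},x_i^{(1)}]=0$. *)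

theory Defs
  imports Main
begin

text \<open>Generators: Xg l i = x_l^(i), Yg l i = y_l^(i), Tg i j = t_ij (indices 1-based).\<close>
datatype gen = Xg nat nat | Yg nat nat | Tg nat nat

datatype 'k lie = Gen gen | Zero | Add "'k lie" "'k lie" | Smul 'k "'k lie" | Br "'k lie" "'k lie"

definition Neg :: "'k::field lie \<Rightarrow> 'k lie" where "Neg x = Smul (-1) x"
definition Sub :: "'k::field lie \<Rightarrow> 'k lie \<Rightarrow> 'k lie" where "Sub x y = Add x (Neg y)"
definition lsum :: "'k lie list \<Rightarrow> 'k lie" where "lsum xs = foldr Add xs Zero"

fun valid_gen :: "nat \<Rightarrow> nat \<Rightarrow> gen \<Rightarrow> bool" where
  "valid_gen g n (Xg l i) = (l \<in> {1..g} \<and> i \<in> {1..n})"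
| "valid_gen g n (Yg l i) = (l \<in> {1..g} \<and> i \<in> {1..n})"
| "valid_gen g n (Tg i j) = (i \<in> {1..n} \<and> j \<in> {1..n})"

fun gens :: "'k lie \<Rightarrow> gen set" where
  "gens (Gen a) = {a}"
| "gens Zero = {}"
| "gens (Add x y) = gens x \<union> gens y"
| "gens (Smul c x) = gens x"
| "gens (Br x y) = gens x \<union> gens y"

text \<open>t \<in> t_(g)(n): only valid generators occur.\<close>
definition wf :: "nat \<Rightarrow> nat \<Rightarrow> 'k lie \<Rightarrow> bool" where
  "wf g n t = (\<forall>a\<in>gens t. valid_gen g n a)"

abbreviation X :: "nat \<Rightarrow> nat \<Rightarrow> 'k lie" where "X l i \<equiv> Gen (Xg l i)"
abbreviation Y :: "nat \<Rightarrow> nat \<Rightarrow> 'k lie" where "Y l i \<equiv> Gen (Yg l i)"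
abbreviation T :: "nat \<Rightarrow> nat \<Rightarrow> 'k lie" where "T i j \<equiv> Gen (Tg i j)"

definition is_rel :: "nat \<Rightarrow> nat \<Rightarrow> 'k::field lie \<Rightarrow> bool" where
  "is_rel g n r \<longleftrightarrow>
     (\<exists>i a. i \<in> {1..n} \<and> valid_gen g n a \<and> r = Br (T i i) (Gen a))
   \<or> (\<exists>i j. i \<in> {1..n} \<and> j \<in> {1..n} \<and> r = Sub (T i j) (T j i))
   \<or> (\<exists>i j k l. i \<in> {1..n} \<and> j \<in> {1..n} \<and> k \<in> {1..n} \<and> l \<in> {1..n}
        \<and> distinct [i,j,k,l] \<and> r = Br (T i j) (T k l))
   \<or> (\<exists>i j k. i \<in> {1..n} \<and> j \<in> {1..n} \<and> k \<in> {1..n}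
        \<and> distinct [i,j,k] \<and> r = Br (Add (T i k) (T k j)) (T i j))
   \<or> (\<exists>i j l k. i \<in> {1..n} \<and> j \<in> {1..n} \<and> l \<in> {1..g} \<and> k \<in> {1..g} \<and> i \<noteq> j
        \<and> (r = Br (X l i) (X k j) \<or> r = Br (Y l i) (Y k j)))
   \<or> (\<exists>i j l k. i \<in> {1..n} \<and> j \<in> {1..n} \<and> l \<in> {1..g} \<and> k \<in> {1..g} \<and> i \<noteq> j
        \<and> k \<noteq> l \<and> r = Br (X k i) (Y l j))
   \<or> (\<exists>i j k. i \<in> {1..n} \<and> j \<in> {1..n} \<and> k \<in> {1..g} \<and> i \<noteq> j
        \<and> r = Sub (Br (X k i) (Y k j)) (T i j))
   \<or> (\<exists>i. i \<in> {1..n} \<and>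
        r = Add (lsum (map (\<lambda>k. Br (X k i) (Y k i)) [1..<g+1]))
                (Add (lsum (map (\<lambda>j. T i j) (filter (\<lambda>j. j \<noteq> i) [1..<n+1])))
                     (Smul (2 - 2 * of_nat g) (T i i))))"

text \<open>The quotient of formal expressions by this relation is the Lie algebra over K
  presented by the generators and relations.\<close>
inductive lie_eq :: "nat \<Rightarrow> nat \<Rightarrow> 'k::field lie \<Rightarrow> 'k lie \<Rightarrow> bool" for g n where
  refl: "lie_eq g n x x"
| sym: "lie_eq g n x y \<Longrightarrow> lie_eq g n y x"
| trans: "lie_eq g n x y \<Longrightarrow> lie_eq g n y z \<Longrightarrow> lie_eq g n x z"
| cong_add: "lie_eq g n x x' \<Longrightarrow> lie_eq g n y y' \<Longrightarrow> lie_eq g n (Add x y) (Add x' y')"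
| cong_smul: "lie_eq g n x x' \<Longrightarrow> lie_eq g n (Smul c x) (Smul c x')"
| cong_br: "lie_eq g n x x' \<Longrightarrow> lie_eq g n y y' \<Longrightarrow> lie_eq g n (Br x y) (Br x' y')"
| add_assoc: "lie_eq g n (Add (Add x y) z) (Add x (Add y z))"
| add_comm: "lie_eq g n (Add x y) (Add y x)"
| add_zero: "lie_eq g n (Add x Zero) x"
| add_neg: "lie_eq g n (Add x (Smul (-1) x)) Zero"
| smul_add: "lie_eq g n (Smul c (Add x y)) (Add (Smul c x) (Smul c y))"
| add_smul: "lie_eq g n (Smul (c + d) x) (Add (Smul c x) (Smul d x))"
| smul_smul: "lie_eq g n (Smul c (Smul d x)) (Smul (c * d) x)"
| smul_one: "lie_eq g n (Smul 1 x) x"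
| br_add_l: "lie_eq g n (Br (Add x y) z) (Add (Br x z) (Br y z))"
| br_add_r: "lie_eq g n (Br z (Add x y)) (Add (Br z x) (Br z y))"
| br_smul_l: "lie_eq g n (Br (Smul c x) y) (Smul c (Br x y))"
| br_smul_r: "lie_eq g n (Br x (Smul c y)) (Smul c (Br x y))"
| br_alt: "lie_eq g n (Br x x) Zero"
| jacobi: "lie_eq g n (Add (Br x (Br y z)) (Add (Br y (Br z x)) (Br z (Br x y)))) Zero"
| rel: "is_rel g n r \<Longrightarrow> lie_eq g n r Zero"

abbreviation lie_zero :: "nat \<Rightarrow> nat \<Rightarrow> 'k::field lie \<Rightarrow> bool" where
  "lie_zero g n x \<equiv> lie_eq g n x Zero"

definition preim :: "nat \<Rightarrow> (nat \<Rightarrow> nat) \<Rightarrow> nat \<Rightarrow> nat list" where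
  "preim m \<phi> i = filter (\<lambda>i'. \<phi> i' = i) [1..<m+1]"

fun pull :: "nat \<Rightarrow> (nat \<Rightarrow> nat) \<Rightarrow> gen \<Rightarrow> 'k::field lie" where
  "pull m \<phi> (Xg l i) = lsum (map (\<lambda>i'. X l i') (preim m \<phi> i))"
| "pull m \<phi> (Yg l i) = lsum (map (\<lambda>i'. Y l i') (preim m \<phi> i))"
| "pull m \<phi> (Tg i j) =
     (if i \<noteq> j then lsum [T i' j'. i' \<leftarrow> preim m \<phi> i, j' \<leftarrow> preim m \<phi> j]
      else Add (lsum [T i' i'. i' \<leftarrow> preim m \<phi> i])
               (Smul (1/2) (lsum [T i' j'. i' \<leftarrow> preim m \<phi> i, j' \<leftarrow> preim m \<phi> i, i' \<noteq> j'])))"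

fun subst :: "(gen \<Rightarrow> 'k lie) \<Rightarrow> 'k lie \<Rightarrow> 'k lie" where
  "subst f (Gen a) = f a"
| "subst f Zero = Zero"
| "subst f (Add x y) = Add (subst f x) (subst f y)"
| "subst f (Smul c x) = Smul c (subst f x)"
| "subst f (Br x y) = Br (subst f x) (subst f y)"

definition up :: "nat \<Rightarrow> (nat \<Rightarrow> nat) \<Rightarrow> 'k::field lie \<Rightarrow> 'k lie" where
  "up m \<phi> \<theta> = subst (pull m \<phi>) \<theta>"

definition sup_1_2 :: "'k::field lie \<Rightarrow> 'k lie" where "sup_1_2 = up 2 (\<lambda>i. i)"
definition sup_2_1 :: "'k::field lie \<Rightarrow> 'k lie" where "sup_2_1 = up 2 (\<lambda>i. if i = 1 then 2 else 1)"
definition sup_12 :: "'k::field lie \<Rightarrow> 'k lie" where "sup_12 = up 2 (\<lambda>i. 1)"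
definition sup_12_3 :: "'k::field lie \<Rightarrow> 'k lie" where "sup_12_3 = up 3 (\<lambda>i. if i \<le> 2 then 1 else 2)"
definition sup_1_23 :: "'k::field lie \<Rightarrow> 'k lie" where "sup_1_23 = up 3 (\<lambda>i. if i = 1 then 1 else 2)"
definition sup_2_13 :: "'k::field lie \<Rightarrow> 'k lie" where "sup_2_13 = up 3 (\<lambda>i. if i = 2 then 1 else 2)"

datatype cls = A nat | B nat

definition cls_set :: "nat \<Rightarrow> cls set" where
  "cls_set g = A ` {1..g} \<union> B ` {1..g}"

fun pair :: "cls \<Rightarrow> cls \<Rightarrow> int" where
  "pair (A i) (B j) = (if i = j then -1 else 0)"
| "pair (B i) (A j) = (if i = j then 1 else 0)"
| "pair _ _ = 0"

fun dual :: "cls \<Rightarrow> cls" where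
  "dual (A i) = B i"
| "dual (B i) = A i"

fun z1 :: "cls \<Rightarrow> 'k lie" where
  "z1 (A i) = X i 1"
| "z1 (B i) = Y i 1"

definition in_Z :: "nat \<Rightarrow> (cls \<Rightarrow> 'k::field lie) \<Rightarrow> bool" where
  "in_Z g U \<longleftrightarrow>
     (\<forall>c\<in>cls_set g. wf g 2 (U c))
   \<and> (\<forall>c\<in>cls_set g. \<exists>u. wf g 1 u \<and>
        lie_eq g 2 (sup_12 u) (Add (sup_1_2 (U c)) (sup_2_1 (U c))))
   \<and> (\<forall>c\<in>cls_set g. lie_zero g 3
        (Sub (Sub (sup_12_3 (U c)) (sup_1_23 (U c))) (sup_2_13 (U c))))
   \<and> (\<forall>i\<in>{1..g}. \<forall>j\<in>{1..g}. lie_zero g 3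
        (Sub (Br (sup_1_23 (U (A i))) (Y j 2)) (Br (sup_2_13 (U (B j))) (X i 1))))
   \<and> (\<forall>i\<in>{1..g}. \<forall>j\<in>{1..g}. i < j \<longrightarrow>
        lie_zero g 3 (Sub (Br (sup_1_23 (U (A i))) (X j 2)) (Br (sup_2_13 (U (A j))) (X i 1)))
      \<and> lie_zero g 3 (Sub (Br (sup_1_23 (U (B i))) (Y j 2)) (Br (sup_2_13 (U (B j))) (Y i 1))))
   \<and> lie_zero g 3 (lsum (map (\<lambda>i. Sub (Br (sup_1_23 (U (A i))) (Y i 1))
                                      (Br (sup_1_23 (U (B i))) (X i 1))) [1..<g+1]))"

definition V :: "cls \<Rightarrow> cls \<Rightarrow> cls \<Rightarrow> cls \<Rightarrow> 'k::field lie" where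
  "V \<alpha> \<beta> \<gamma> c =
    (if c = dual \<alpha> then
       Smul (- of_int (pair \<alpha> (dual \<alpha>)))
            (Add (Br (z1 \<beta>) (z1 \<gamma>)) (Smul (2 * of_int (pair \<beta> \<gamma>)) (T 1 1)))
     else if c = dual \<beta> then
       Smul (of_int (pair \<beta> (dual \<beta>)))
            (Add (Br (z1 \<alpha>) (z1 \<gamma>)) (Smul (2 * of_int (pair \<alpha> \<gamma>)) (T 1 1)))
     else if c = dual \<gamma> then
       Smul (- of_int (pair \<gamma> (dual \<gamma>)))
            (Add (Br (z1 \<alpha>) (z1 \<beta>)) (Smul (2 * of_int (pair \<alpha> \<beta>)) (T 1 1)))
     else Zero)"

end

theory Submission
  imports Defs
begin

lemmas lq_refl = lie_eq.refl
lemmas lq_sym = lie_eq.sym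
lemmas lq_trans [trans] = lie_eq.trans

lemma le_add_cong: "lie_eq g n x x' \<Longrightarrow> lie_eq g n y y' \<Longrightarrow> lie_eq g n (Add x y) (Add x' y')"
  by (rule lie_eq.cong_add)

lemma smul0: "lie_eq g n (Smul 0 x) Zero"
proof -
  have "lie_eq g n (Smul (0+0) x) (Add (Smul 0 x) (Smul 0 x))" by (rule lie_eq.add_smul)
  hence h: "lie_eq g n (Smul 0 x) (Add (Smul 0 x) (Smul 0 x))" by simp
  let ?y = "Smul 0 x"
  have "lie_eq g n Zero (Add ?y (Smul (-1) ?y))" by (rule lq_sym[OF lie_eq.add_neg])
  also have "lie_eq g n ... (Add (Add ?y ?y) (Smul (-1) ?y))" by (intro lie_eq.cong_add h lq_refl)
  also have "lie_eq g n ... (Add ?y (Add ?y (Smul (-1) ?y)))" by (rule lie_eq.add_assoc)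
  also have "lie_eq g n ... (Add ?y Zero)" by (intro lie_eq.cong_add lq_refl lie_eq.add_neg)
  also have "lie_eq g n ... ?y" by (rule lie_eq.add_zero)
  finally show ?thesis by (rule lq_sym)
qed

lemma smul_Zero: "lie_eq g n (Smul c Zero) Zero"
proof -
  have "lie_eq g n (Smul c Zero) (Smul c (Smul 0 Zero))" by (intro lie_eq.cong_smul lq_sym[OF smul0])
  also have "lie_eq g n ... (Smul (c*0) Zero)" by (rule lie_eq.smul_smul)
  also have "lie_eq g n ... Zero" using smul0 by simp
  finally show ?thesis .
qed

lemma zero_add: "lie_eq g n (Add Zero x) x"
  by (rule lq_trans[OF lie_eq.add_comm lie_eq.add_zero])

lemma add_lcomm: "lie_eq g n (Add a (Add b c)) (Add b (Add a c))"
proof -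
  have "lie_eq g n (Add a (Add b c)) (Add (Add a b) c)" by (rule lq_sym[OF lie_eq.add_assoc])
  also have "lie_eq g n ... (Add (Add b a) c)" by (intro lie_eq.cong_add lie_eq.add_comm lq_refl)
  also have "lie_eq g n ... (Add b (Add a c))" by (rule lie_eq.add_assoc)
  finally show ?thesis .
qed

lemma add4: "lie_eq g n (Add (Add a b) (Add c d)) (Add (Add a c) (Add b d))"
proof -
  have "lie_eq g n (Add (Add a b) (Add c d)) (Add a (Add b (Add c d)))" by (rule lie_eq.add_assoc)
  also have "lie_eq g n ... (Add a (Add c (Add b d)))" by (intro lie_eq.cong_add lq_refl add_lcomm)
  also have "lie_eq g n ... (Add (Add a c) (Add b d))" by (rule lq_sym[OF lie_eq.add_assoc])
  finally show ?thesis .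
qed

lemma br_Zero_l: "lie_eq g n (Br Zero y) Zero"
proof -
  have "lie_eq g n (Br Zero y) (Br (Smul 0 Zero) y)" by (intro lie_eq.cong_br lq_sym[OF smul0] lq_refl)
  also have "lie_eq g n ... (Smul 0 (Br Zero y))" by (rule lie_eq.br_smul_l)
  also have "lie_eq g n ... Zero" by (rule smul0)
  finally show ?thesis .
qed

lemma br_Zero_r: "lie_eq g n (Br y Zero) Zero"
proof -
  have "lie_eq g n (Br y Zero) (Br y (Smul 0 Zero))" by (intro lie_eq.cong_br lq_sym[OF smul0] lq_refl)
  also have "lie_eq g n ... (Smul 0 (Br y Zero))" by (rule lie_eq.br_smul_r)
  also have "lie_eq g n ... Zero" by (rule smul0)
  finally show ?thesis .
qed

lemma z_add: "lie_eq g n x Zero \<Longrightarrow> lie_eq g n y Zero \<Longrightarrow> lie_eq g n (Add x y) Zero"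
  by (rule lq_trans[OF lie_eq.cong_add lie_eq.add_zero])

lemma z_smul: "lie_eq g n x Zero \<Longrightarrow> lie_eq g n (Smul c x) Zero"
  by (rule lq_trans[OF lie_eq.cong_smul smul_Zero])

lemma z_br_l: "lie_eq g n x Zero \<Longrightarrow> lie_eq g n (Br x y) Zero"
  by (rule lq_trans[OF lie_eq.cong_br[OF _ lq_refl] br_Zero_l])

lemma z_br_r: "lie_eq g n x Zero \<Longrightarrow> lie_eq g n (Br y x) Zero"
  by (rule lq_trans[OF lie_eq.cong_br[OF lq_refl] br_Zero_r])

lemma z_sub: "lie_eq g n x y \<Longrightarrow> lie_eq g n (Sub x y) Zero"
  unfolding Sub_def Neg_def
  by (rule lq_trans[OF lie_eq.cong_add[OF _ lq_refl] lie_eq.add_neg])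

fun lc :: "'k::field lie \<Rightarrow> 'k lie \<Rightarrow> 'k" where
  "lc (Gen v) a = (if a = Gen v then 1 else 0)"
| "lc Zero a = 0"
| "lc (Add x y) a = lc x a + lc y a"
| "lc (Smul c x) a = c * lc x a"
| "lc (Br x y) a = (case a of Br a1 a2 \<Rightarrow> lc x a1 * lc y a2 | _ \<Rightarrow> 0)"

fun mons :: "'k lie \<Rightarrow> 'k lie list" where
  "mons (Gen v) = [Gen v]"
| "mons Zero = []"
| "mons (Add x y) = mons x @ mons y"
| "mons (Smul c x) = mons x"
| "mons (Br x y) = [Br a b. a \<leftarrow> mons x, b \<leftarrow> mons y]"

lemma lc_supp: "lc e a \<noteq> 0 \<Longrightarrow> a \<in> set (mons e)"
proof (induction e arbitrary: a)
  case (Br x y)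
  then show ?case by (auto split: lie.splits)
next
  case (Add x y)
  then show ?case by (cases "lc x a = 0") auto
qed (auto split: if_splits)

lemma lc_zero: "a \<notin> set (mons e) \<Longrightarrow> lc e a = 0"
  using lc_supp by blast

definition lcomb :: "'k::field lie list \<Rightarrow> ('k lie \<Rightarrow> 'k) \<Rightarrow> 'k lie" where
  "lcomb L f = lsum (map (\<lambda>a. Smul (f a) a) L)"

lemma lcomb_Nil[simp]: "lcomb [] f = Zero" by (simp add: lcomb_def lsum_def)
lemma lcomb_Cons[simp]: "lcomb (a # L) f = Add (Smul (f a) a) (lcomb L f)"
  by (simp add: lcomb_def lsum_def)

lemma lcomb_zero: "(\<forall>a\<in>set L. f a = 0) \<Longrightarrow> lie_eq g n (lcomb L f) Zero"
  by (induction L) (auto intro: lq_refl z_add smul0)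

lemma lcomb_add: "lie_eq g n (Add (lcomb L f) (lcomb L h)) (lcomb L (\<lambda>a. f a + h a))"
proof (induction L)
  case Nil then show ?case by (simp add: lie_eq.add_zero)
next
  case (Cons a L)
  have "lie_eq g n (Add (lcomb (a#L) f) (lcomb (a#L) h))
     (Add (Add (Smul (f a) a) (Smul (h a) a)) (Add (lcomb L f) (lcomb L h)))"
    by (simp add: add4)
  also have "lie_eq g n ... (Add (Smul (f a + h a) a) (lcomb L (\<lambda>a. f a + h a)))"
    by (intro lie_eq.cong_add Cons lq_sym[OF lie_eq.add_smul])
  finally show ?case by simp
qed

lemma lcomb_smul: "lie_eq g n (Smul c (lcomb L f)) (lcomb L (\<lambda>a. c * f a))"
proof (induction L)
  case Nil then show ?case by (simp add: smul_Zero)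
next
  case (Cons a L)
  have "lie_eq g n (Smul c (lcomb (a#L) f)) (Add (Smul c (Smul (f a) a)) (Smul c (lcomb L f)))"
    by (simp add: lie_eq.smul_add)
  also have "lie_eq g n ... (Add (Smul (c * f a) a) (lcomb L (\<lambda>a. c * f a)))"
    by (intro lie_eq.cong_add Cons lie_eq.smul_smul)
  finally show ?case by simp
qed

lemma lcomb_filter: "(\<forall>a\<in>set L. \<not> P a \<longrightarrow> f a = 0) \<Longrightarrow> lie_eq g n (lcomb L f) (lcomb (filter P L) f)"
proof (induction L)
  case Nil then show ?case by (simp add: lq_refl)
next
  case (Cons a L)
  show ?case
  proof (cases "P a")
    case True then show ?thesis using Cons by (auto intro: lie_eq.cong_add lq_refl)
  next
    case False
    then have "lie_eq g n (lcomb (a#L) f) (Add Zero (lcomb L f))" using Cons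
      by (auto intro!: lie_eq.cong_add lq_refl smul0)
    also have "lie_eq g n ... (lcomb L f)" by (rule zero_add)
    also have "lie_eq g n ... (lcomb (filter P L) f)" using Cons by auto
    finally show ?thesis using False by simp
  qed
qed

lemma lcomb_move: "lie_eq g n (lcomb (P @ a # S) f) (Add (Smul (f a) a) (lcomb (P @ S) f))"
proof (induction P)
  case Nil then show ?case by (simp add: lq_refl)
next
  case (Cons b P)
  have "lie_eq g n (lcomb ((b # P) @ a # S) f) (Add (Smul (f b) b) (Add (Smul (f a) a) (lcomb (P @ S) f)))"
    using Cons by (auto intro: lie_eq.cong_add lq_refl)
  also have "lie_eq g n ... (Add (Smul (f a) a) (Add (Smul (f b) b) (lcomb (P @ S) f)))"
    by (rule add_lcomm)
  finally show ?case by simp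
qed

lemma lcomb_perm: "distinct L1 \<Longrightarrow> distinct L2 \<Longrightarrow> set L1 = set L2 \<Longrightarrow> lie_eq g n (lcomb L1 f) (lcomb L2 f)"
proof (induction L1 arbitrary: L2)
  case Nil then show ?case by (simp add: lq_refl)
next
  case (Cons a L1)
  then have "a \<in> set L2" by auto
  then obtain P S where L2: "L2 = P @ a # S" by (meson split_list)
  have "set L1 = set (P @ S)" using Cons.prems L2 by auto
  moreover have "distinct (P @ S)" using Cons.prems L2 by auto
  ultimately have "lie_eq g n (lcomb L1 f) (lcomb (P @ S) f)" using Cons by auto
  then have "lie_eq g n (lcomb (a # L1) f) (Add (Smul (f a) a) (lcomb (P @ S) f))"
    by (auto intro: lie_eq.cong_add lq_refl)
  also have "lie_eq g n ... (lcomb L2 f)" unfolding L2 by (rule lq_sym[OF lcomb_move])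
  finally show ?case .
qed

lemma lcomb_ext: assumes "distinct L1" "distinct L2" "set L1 \<subseteq> set L2" "\<forall>a\<in>set L2 - set L1. f a = 0"
  shows "lie_eq g n (lcomb L1 f) (lcomb L2 f)"
proof -
  have "lie_eq g n (lcomb L2 f) (lcomb (filter (\<lambda>a. a \<in> set L1) L2) f)"
    using assms by (intro lcomb_filter) auto
  moreover have "lie_eq g n (lcomb L1 f) (lcomb (filter (\<lambda>a. a \<in> set L1) L2) f)"
    using assms by (intro lcomb_perm) auto
  ultimately show ?thesis by (meson lq_sym lq_trans)
qed

lemma lsum_Cons[simp]: "lsum (x # xs) = Add x (lsum xs)" by (simp add: lsum_def)
lemma lsum_Nil[simp]: "lsum [] = Zero" by (simp add: lsum_def)

lemma lsum_append: "lie_eq g n (lsum (xs @ ys)) (Add (lsum xs) (lsum ys))"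
proof (induction xs)
  case Nil then show ?case by (simp add: lq_sym[OF zero_add])
next
  case (Cons x xs)
  have "lie_eq g n (lsum ((x # xs) @ ys)) (Add x (Add (lsum xs) (lsum ys)))"
    using Cons by (auto intro: lie_eq.cong_add lq_refl)
  also have "lie_eq g n ... (Add (lsum (x#xs)) (lsum ys))" by (simp add: lq_sym[OF lie_eq.add_assoc])
  finally show ?case .
qed

lemma br_lsum_l: "lie_eq g n (Br (lsum xs) y) (lsum (map (\<lambda>x. Br x y) xs))"
proof (induction xs)
  case Nil then show ?case by (simp add: br_Zero_l)
next
  case (Cons x xs) then show ?case
    by (auto intro: lq_trans[OF lie_eq.br_add_l] lie_eq.cong_add lq_refl)
qed

lemma br_lsum_r: "lie_eq g n (Br y (lsum xs)) (lsum (map (\<lambda>x. Br y x) xs))"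
proof (induction xs)
  case Nil then show ?case by (simp add: br_Zero_r)
next
  case (Cons x xs) then show ?case
    by (auto intro: lq_trans[OF lie_eq.br_add_r] lie_eq.cong_add lq_refl)
qed

lemma lsum_cong: "(\<And>x. x \<in> set xs \<Longrightarrow> lie_eq g n (f x) (h x)) \<Longrightarrow> lie_eq g n (lsum (map f xs)) (lsum (map h xs))"
  by (induction xs) (auto intro: lie_eq.cong_add lq_refl)

lemma lsum_concat: "lie_eq g n (lsum (concat xss)) (lsum (map lsum xss))"
proof (induction xss)
  case Nil then show ?case by (simp add: lq_refl)
next
  case (Cons xs xss)
  have "lie_eq g n (lsum (concat (xs # xss))) (Add (lsum xs) (lsum (concat xss)))"
    by (simp add: lsum_append)
  also have "lie_eq g n ... (lsum (map lsum (xs # xss)))" using Cons by (auto intro: lie_eq.cong_add lq_refl)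
  finally show ?case .
qed

lemma br_smul_smul: "lie_eq g n (Br (Smul c a) (Smul d b)) (Smul (c * d) (Br a b))"
proof -
  have "lie_eq g n (Br (Smul c a) (Smul d b)) (Smul c (Br a (Smul d b)))" by (rule lie_eq.br_smul_l)
  also have "lie_eq g n ... (Smul c (Smul d (Br a b)))" by (intro lie_eq.cong_smul lie_eq.br_smul_r)
  also have "lie_eq g n ... (Smul (c*d) (Br a b))" by (rule lie_eq.smul_smul)
  finally show ?thesis .
qed

lemma lcomb_br: "lie_eq g n (Br (lcomb L1 f) (lcomb L2 h))
   (lcomb [Br a b. a \<leftarrow> L1, b \<leftarrow> L2] (\<lambda>m. case m of Br a b \<Rightarrow> f a * h b | _ \<Rightarrow> 0))"
proof -
  let ?F = "\<lambda>m. case m of Br a b \<Rightarrow> f a * h b | _ \<Rightarrow> 0"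
  have "lie_eq g n (Br (lcomb L1 f) (lcomb L2 h)) (lsum (map (\<lambda>a. Br (Smul (f a) a) (lcomb L2 h)) L1))"
    unfolding lcomb_def[of L1] using br_lsum_l[of g n "map (\<lambda>a. Smul (f a) a) L1" "lcomb L2 h"] by (simp add: comp_def)
  also have "lie_eq g n ... (lsum (map (\<lambda>a. lsum (map (\<lambda>b. Smul (?F (Br a b)) (Br a b)) L2)) L1))"
  proof (rule lsum_cong)
    fix a
    have "lie_eq g n (Br (Smul (f a) a) (lcomb L2 h)) (lsum (map (\<lambda>b. Br (Smul (f a) a) (Smul (h b) b)) L2))"
      unfolding lcomb_def using br_lsum_r[of g n "Smul (f a) a" "map (\<lambda>a. Smul (h a) a) L2"] by (simp add: comp_def)
    also have "lie_eq g n ... (lsum (map (\<lambda>b. Smul (?F (Br a b)) (Br a b)) L2))"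
      by (rule lsum_cong) (simp add: br_smul_smul)
    finally show "lie_eq g n (Br (Smul (f a) a) (lcomb L2 h)) (lsum (map (\<lambda>b. Smul (?F (Br a b)) (Br a b)) L2))" .
  qed
  also have "lie_eq g n ... (lcomb [Br a b. a \<leftarrow> L1, b \<leftarrow> L2] ?F)"
  proof -
    have e: "map (\<lambda>m. Smul (?F m) m) (concat (map (\<lambda>a. map (Br a) L2) L1)) =
      concat (map (\<lambda>a. map (\<lambda>b. Smul (?F (Br a b)) (Br a b)) L2) L1)"
      by (simp add: map_concat comp_def)
    show ?thesis unfolding lcomb_def
      using lq_sym[OF lsum_concat[of g n "map (\<lambda>a. map (\<lambda>b. Smul (?F (Br a b)) (Br a b)) L2) L1"]]
      by (simp add: e comp_def)
  qed
  finally show ?thesis .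
qed

lemma distinct_brs: "distinct L1 \<Longrightarrow> distinct L2 \<Longrightarrow> distinct (concat (map (\<lambda>a. map (Br a) L2) L1))"
proof (induction L1)
  case Nil then show ?case by simp
next
  case (Cons a L1)
  have "distinct (map (Br a) L2)" using Cons.prems by (simp add: distinct_map inj_on_def)
  moreover have "set (map (Br a) L2) \<inter> set (concat (map (\<lambda>a. map (Br a) L2) L1)) = {}"
    using Cons.prems by auto
  ultimately show ?case using Cons by simp
qed

lemma expand0: "lie_eq g n e (lcomb (remdups (mons e)) (lc e))"
proof (induction e)
  case (Gen v) then show ?case by (simp add: lq_sym[OF lq_trans[OF lie_eq.add_zero lie_eq.smul_one]])
next
  case Zero then show ?case by (simp add: lq_refl)
next
  case (Add x y)
  let ?L = "remdups (mons x @ mons y)"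
  have "lie_eq g n x (lcomb ?L (lc x))"
    using Add.IH(1) apply (rule lq_trans) apply (rule lcomb_ext) apply simp apply simp apply simp
    apply (simp add: lc_zero) done
  moreover have "lie_eq g n y (lcomb ?L (lc y))"
    using Add.IH(2) apply (rule lq_trans) apply (rule lcomb_ext) apply simp apply simp apply simp
    apply (simp add: lc_zero) done
  ultimately have "lie_eq g n (Add x y) (Add (lcomb ?L (lc x)) (lcomb ?L (lc y)))" by (rule lie_eq.cong_add)
  also have "lie_eq g n ... (lcomb ?L (lc (Add x y)))"
  proof -
    have "(\<lambda>a. lc x a + lc y a) = lc (Add x y)" by auto
    then show ?thesis using lcomb_add[of g n ?L "lc x" "lc y"] by simp
  qed
  finally show ?case by (simp only: mons.simps)
next
  case (Smul c x)
  have "lie_eq g n (Smul c x) (Smul c (lcomb (remdups (mons x)) (lc x)))" using Smul by (rule lie_eq.cong_smul)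
  also have "lie_eq g n ... (lcomb (remdups (mons x)) (lc (Smul c x)))"
  proof -
    have "(\<lambda>a. c * lc x a) = lc (Smul c x)" by auto
    then show ?thesis using lcomb_smul[of g n c _ "lc x"] by simp
  qed
  finally show ?case by (simp only: mons.simps)
next
  case (Br x y)
  let ?Lx = "remdups (mons x)" and ?Ly = "remdups (mons y)"
  have "lie_eq g n (Br x y) (Br (lcomb ?Lx (lc x)) (lcomb ?Ly (lc y)))" using Br by (rule lie_eq.cong_br)
  also have "lie_eq g n ... (lcomb [Br a b. a \<leftarrow> ?Lx, b \<leftarrow> ?Ly] (lc (Br x y)))"
  proof -
    have eq: "(\<lambda>m. case m of Br a b \<Rightarrow> lc x a * lc y b | _ \<Rightarrow> 0) = lc (Br x y)" by (rule ext) simp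
    from lcomb_br[of g n ?Lx "lc x" ?Ly "lc y"] show ?thesis unfolding eq .
  qed
  also have "lie_eq g n ... (lcomb (remdups (mons (Br x y))) (lc (Br x y)))"
    apply (rule lcomb_perm) apply (rule distinct_brs) apply simp apply simp apply simp apply simp done
  finally show ?case .
qed

lemma expand: "distinct L \<Longrightarrow> set (mons e) \<subseteq> set L \<Longrightarrow> lie_eq g n e (lcomb L (lc e))"
  by (rule lq_trans[OF expand0], rule lcomb_ext) (auto simp: lc_zero)

lemma lc_eq: assumes "lie_eq g n R Zero"
  and "\<forall>a\<in>set (mons e1 @ mons e2 @ mons R). lc e1 a = lc e2 a + lc R a"
  shows "lie_eq g n e1 e2"
proof -
  let ?L = "remdups (mons e1 @ mons e2 @ mons R)"
  have "lie_eq g n e1 (lcomb ?L (lc e1))" by (rule expand) auto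
  also have "lcomb ?L (lc e1) = lcomb ?L (\<lambda>a. lc e2 a + lc R a)"
    unfolding lcomb_def using assms(2) by (intro arg_cong[where f=lsum] map_cong) auto
  also have "lie_eq g n ... (Add (lcomb ?L (lc e2)) (lcomb ?L (lc R)))" by (rule lq_sym[OF lcomb_add])
  also have "lie_eq g n ... (Add e2 Zero)"
    by (intro lie_eq.cong_add lq_trans[OF lq_sym[OF expand] assms(1)] lq_sym[OF expand]) auto
  also have "lie_eq g n ... e2" by (rule lie_eq.add_zero)
  finally show ?thesis .
qed

lemma lc_eq0: "\<forall>a\<in>set (mons e1 @ mons e2). lc e1 a = lc e2 a \<Longrightarrow> lie_eq g n e1 e2"
  by (rule lc_eq[where R=Zero]) (auto intro: lq_refl)

lemma add_eq_zero: assumes "lie_eq g n (Add a b) Zero" shows "lie_eq g n a (Smul (-1) b)"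
proof -
  have "lie_eq g n a (Add a Zero)" by (rule lq_sym[OF lie_eq.add_zero])
  also have "lie_eq g n ... (Add a (Add b (Smul (-1) b)))" by (intro lie_eq.cong_add lq_refl lq_sym[OF lie_eq.add_neg])
  also have "lie_eq g n ... (Add (Add a b) (Smul (-1) b))" by (rule lq_sym[OF lie_eq.add_assoc])
  also have "lie_eq g n ... (Add Zero (Smul (-1) b))" by (intro lie_eq.cong_add lq_refl assms)
  also have "lie_eq g n ... (Smul (-1) b)" by (rule zero_add)
  finally show ?thesis .
qed

lemma br_anti0: "lie_eq g n (Add (Br x y) (Br y x)) Zero"
proof -
  have "lie_eq g n Zero (Br (Add x y) (Add x y))" by (rule lq_sym[OF lie_eq.br_alt])
  also have "lie_eq g n ... (Add (Br x (Add x y)) (Br y (Add x y)))" by (rule lie_eq.br_add_l)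
  also have "lie_eq g n ... (Add (Add (Br x x) (Br x y)) (Add (Br y x) (Br y y)))"
    by (intro lie_eq.cong_add lie_eq.br_add_r)
  also have "lie_eq g n ... (Add (Add Zero (Br x y)) (Add (Br y x) Zero))"
    by (intro lie_eq.cong_add lie_eq.br_alt lq_refl)
  also have "lie_eq g n ... (Add (Br x y) (Br y x))"
    by (intro lie_eq.cong_add zero_add lie_eq.add_zero)
  finally show ?thesis by (rule lq_sym)
qed

lemma br_anti: "lie_eq g n (Br x y) (Smul (-1) (Br y x))"
  by (rule add_eq_zero[OF br_anti0])

fun zg :: "nat \<Rightarrow> cls \<Rightarrow> gen" where
  "zg m (A i) = Xg i m"
| "zg m (B i) = Yg i m"

lemma z1_eq: "z1 p = Gen (zg 1 p)" by (cases p) simp_all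

lemma zg_inj[simp]: "zg m p = zg m' q \<longleftrightarrow> m = m' \<and> p = q" by (cases p; cases q) auto
lemma zg_T[simp]: "zg m p \<noteq> Tg i j" "Tg i j \<noteq> zg m p" by (cases p; simp)+

lemma pull_zg[simp]: "pull m \<phi> (zg k p) = lsum (map (\<lambda>i. Gen (zg i p)) (preim m \<phi> k))"
  by (cases p) simp_all

definition W :: "cls \<Rightarrow> cls \<Rightarrow> 'k::field lie" where
  "W p q = Add (Br (Gen (zg 1 p)) (Gen (zg 1 q))) (Smul (2 * of_int (pair p q)) (T 1 1))"

lemma V_W: "V \<alpha> \<beta> \<gamma> c =
    (if c = dual \<alpha> then Smul (- of_int (pair \<alpha> (dual \<alpha>))) (W \<beta> \<gamma>)
     else if c = dual \<beta> then Smul (of_int (pair \<beta> (dual \<beta>))) (W \<alpha> \<gamma>)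
     else if c = dual \<gamma> then Smul (- of_int (pair \<gamma> (dual \<gamma>))) (W \<alpha> \<beta>)
     else Zero)"
  by (simp add: V_def W_def z1_eq)

lemma cls_set_iff: "c \<in> cls_set g \<longleftrightarrow> (\<exists>i\<in>{1..g}. c = A i \<or> c = B i)"
  unfolding cls_set_def by auto

lemma valid_zg[simp]: "valid_gen g n (zg m p) \<longleftrightarrow> m \<in> {1..n} \<and> (case p of A i \<Rightarrow> i \<in> {1..g} | B i \<Rightarrow> i \<in> {1..g})"
  by (cases p) auto

lemma rel_cent: "i \<in> {1..n} \<Longrightarrow> valid_gen g n a \<Longrightarrow> lie_eq g n (Br (T i i) (Gen a)) Zero"
  by (rule lie_eq.rel, unfold is_rel_def, rule disjI1, blast)

lemma rel_sym: "i \<in> {1..n} \<Longrightarrow> j \<in> {1..n} \<Longrightarrow> lie_eq g n (Sub (T i j) (T j i)) Zero"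
  by (rule lie_eq.rel, unfold is_rel_def, rule disjI2, rule disjI1, blast)

lemma rel_xx: "i \<in> {1..n} \<Longrightarrow> j \<in> {1..n} \<Longrightarrow> l \<in> {1..g} \<Longrightarrow> k \<in> {1..g} \<Longrightarrow> i \<noteq> j \<Longrightarrow>
   lie_eq g n (Br (X l i) (X k j)) Zero"
  by (rule lie_eq.rel) (unfold is_rel_def, blast)

lemma rel_yy: "i \<in> {1..n} \<Longrightarrow> j \<in> {1..n} \<Longrightarrow> l \<in> {1..g} \<Longrightarrow> k \<in> {1..g} \<Longrightarrow> i \<noteq> j \<Longrightarrow>
   lie_eq g n (Br (Y l i) (Y k j)) Zero"
  by (rule lie_eq.rel) (unfold is_rel_def, blast)

lemma rel_xy: "i \<in> {1..n} \<Longrightarrow> j \<in> {1..n} \<Longrightarrow> l \<in> {1..g} \<Longrightarrow> k \<in> {1..g} \<Longrightarrow> i \<noteq> j \<Longrightarrow> k \<noteq> l \<Longrightarrow>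
   lie_eq g n (Br (X k i) (Y l j)) Zero"
  by (rule lie_eq.rel) (unfold is_rel_def, blast)

lemma rel_xyt: "i \<in> {1..n} \<Longrightarrow> j \<in> {1..n} \<Longrightarrow> k \<in> {1..g} \<Longrightarrow> i \<noteq> j \<Longrightarrow>
   lie_eq g n (Sub (Br (X k i) (Y k j)) (T i j)) Zero"
  by (rule lie_eq.rel) (unfold is_rel_def, blast)

lemma rel_sum: "i \<in> {1..n} \<Longrightarrow>
   lie_eq g n (Add (lsum (map (\<lambda>k. Br (X k i) (Y k i)) [1..<g+1]))
                (Add (lsum (map (\<lambda>j. T i j) (filter (\<lambda>j. j \<noteq> i) [1..<n+1])))
                     (Smul (2 - 2 * of_nat g) (T i i)))) Zero"
  by (rule lie_eq.rel) (unfold is_rel_def, blast)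

lemma G1: assumes n: "2 \<le> n" and p: "p \<in> cls_set g" and r: "r \<in> cls_set g"
  shows "lie_eq g n (Br (Gen (zg 1 p)) (Gen (zg 2 r))) (Smul (of_int (pair r p)) (T 1 2))"
proof -
  have n1: "1 \<in> {1..n}" and n2: "2 \<in> {1..n}" using n by auto
  obtain k where k: "k \<in> {1..g}" "p = A k \<or> p = B k" using p by (auto simp: cls_set_iff)
  obtain j where j: "j \<in> {1..g}" "r = A j \<or> r = B j" using r by (auto simp: cls_set_iff)
  show ?thesis
  proof (cases "p = A k")
    case pA: True
    show ?thesis
    proof (cases "r = A j")
      case True
      show ?thesis using pA True
        apply -
        apply (rule lc_eq[where R="Br (X k 1) (X j 2)"])
         apply (rule rel_xx; use k j n1 n2 in simp)
        apply simp
        done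
    next
      case False
      hence rB: "r = B j" using j by auto
      show ?thesis
      proof (cases "k = j")
        case True
        show ?thesis using pA rB True
          apply -
          apply (rule lc_eq[where R="Sub (Br (X k 1) (Y k 2)) (T 1 2)"])
           apply (rule rel_xyt; use k j n1 n2 in simp)
          apply (simp add: Sub_def Neg_def)
          done
      next
        case False
        show ?thesis using pA rB False
          apply -
          apply (rule lc_eq[where R="Br (X k 1) (Y j 2)"])
           apply (rule rel_xy; use k j n1 n2 in simp)
          apply (simp add: Sub_def Neg_def)
          done
      qed
    qed
  next
    case False
    hence pB: "p = B k" using k by auto
    show ?thesis
    proof (cases "r = A j")
      case rA: True
      show ?thesis
      proof (cases "k = j")
        case True
        show ?thesis using pB rA True
          apply -
          apply (rule lc_eq[where R="Add (Add (Br (Y k 1) (X k 2)) (Br (X k 2) (Y k 1)))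
             (Add (Smul (-1) (Sub (Br (X k 2) (Y k 1)) (T 2 1))) (Smul (-1) (Sub (T 2 1) (T 1 2))))"])
           apply (rule z_add[OF br_anti0 z_add[OF z_smul[OF rel_xyt] z_smul[OF rel_sym]]]; use k j n1 n2 in simp)
          apply (simp add: Sub_def Neg_def)
          done
      next
        case False
        show ?thesis using pB rA False
          apply -
          apply (rule lc_eq[where R="Add (Add (Br (Y k 1) (X j 2)) (Br (X j 2) (Y k 1)))
             (Smul (-1) (Br (X j 2) (Y k 1)))"])
           apply (rule z_add[OF br_anti0 z_smul[OF rel_xy]]; use k j n1 n2 in simp)
          apply (simp add: Sub_def Neg_def)
          done
      qed
    next
      case False
      hence rB: "r = B j" using j by auto
      show ?thesis using pB rB
        apply -
        apply (rule lc_eq[where R="Br (Y k 1) (Y j 2)"])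
         apply (rule rel_yy; use k j n1 n2 in simp)
        apply simp
        done
    qed
  qed
qed

lemma G1': assumes n: "2 \<le> n" and p: "p \<in> cls_set g" and r: "r \<in> cls_set g"
  shows "lie_eq g n (Br (Gen (zg 2 p)) (Gen (zg 1 r))) (Smul (of_int (pair r p)) (T 1 2))"
proof -
  have n1: "1 \<in> {1..n}" and n2: "2 \<in> {1..n}" using n by auto
  obtain k where k: "k \<in> {1..g}" "p = A k \<or> p = B k" using p by (auto simp: cls_set_iff)
  obtain j where j: "j \<in> {1..g}" "r = A j \<or> r = B j" using r by (auto simp: cls_set_iff)
  show ?thesis
  proof (cases "p = A k")
    case pA: True
    show ?thesis
    proof (cases "r = A j")
      case True
      show ?thesis using pA True
        apply -
        apply (rule lc_eq[where R="Br (X k 2) (X j 1)"])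
         apply (rule rel_xx; use k j n1 n2 in simp)
        apply simp
        done
    next
      case False
      hence rB: "r = B j" using j by auto
      show ?thesis
      proof (cases "k = j")
        case True
        show ?thesis using pA rB True
          apply -
          apply (rule lc_eq[where R="Add (Sub (Br (X k 2) (Y k 1)) (T 2 1)) (Sub (T 2 1) (T 1 2))"])
           apply (rule z_add[OF rel_xyt rel_sym]; use k j n1 n2 in simp)
          apply (simp add: Sub_def Neg_def)
          done
      next
        case False
        show ?thesis using pA rB False
          apply -
          apply (rule lc_eq[where R="Br (X k 2) (Y j 1)"])
           apply (rule rel_xy; use k j n1 n2 in simp)
          apply (simp add: Sub_def Neg_def)
          done
      qed
    qed
  next
    case False
    hence pB: "p = B k" using k by auto
    show ?thesis
    proof (cases "r = A j")
      case rA: True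
      show ?thesis
      proof (cases "k = j")
        case True
        show ?thesis using pB rA True
          apply -
          apply (rule lc_eq[where R="Add (Add (Br (Y k 2) (X k 1)) (Br (X k 1) (Y k 2)))
             (Smul (-1) (Sub (Br (X k 1) (Y k 2)) (T 1 2)))"])
           apply (rule z_add[OF br_anti0 z_smul[OF rel_xyt]]; use k j n1 n2 in simp)
          apply (simp add: Sub_def Neg_def)
          done
      next
        case False
        show ?thesis using pB rA False
          apply -
          apply (rule lc_eq[where R="Add (Add (Br (Y k 2) (X j 1)) (Br (X j 1) (Y k 2)))
             (Smul (-1) (Br (X j 1) (Y k 2)))"])
           apply (rule z_add[OF br_anti0 z_smul[OF rel_xy]]; use k j n1 n2 in simp)
          apply (simp add: Sub_def Neg_def)
          done
      qed
    next
      case False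
      hence rB: "r = B j" using j by auto
      show ?thesis using pB rB
        apply -
        apply (rule lc_eq[where R="Br (Y k 2) (Y j 1)"])
         apply (rule rel_yy; use k j n1 n2 in simp)
        apply simp
        done
    qed
  qed
qed

lemma br_zero_swap: "lie_eq g n (Br x y) Zero \<Longrightarrow> lie_eq g n (Br y x) Zero"
  by (rule lq_trans[OF br_anti z_smul])

lemma lemma_a: assumes g: "2 \<le> g" and q: "q \<in> cls_set g"
  shows "lie_eq g 3 (Br (Gen (zg 1 q)) (T 2 3)) Zero"
proof -
  obtain k where k: "k \<in> {1..g}" "q = A k \<or> q = B k" using q by (auto simp: cls_set_iff)
  define m where "m = (if k = 1 then 2 else (1::nat))"
  have m: "m \<in> {1..g}" "m \<noteq> k" using g k by (auto simp: m_def)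
  let ?a = "Gen (zg 1 q)" and ?b = "X m 2" and ?c = "Y m 3"
  have F1: "lie_eq g 3 (Br ?a (Sub (Br ?b ?c) (T 2 3))) Zero"
    by (rule z_br_r, rule rel_xyt) (use m in auto)
  have F2: "lie_eq g 3 (Br ?b (Br ?c ?a)) Zero"
  proof (rule z_br_r)
    show "lie_eq g 3 (Br ?c ?a) Zero"
    proof (cases "q = A k")
      case True show ?thesis unfolding True zg.simps by (rule br_zero_swap, rule rel_xy) (use k m in auto)
    next
      case False then have qB: "q = B k" using k by auto
      show ?thesis unfolding qB zg.simps by (rule rel_yy) (use k m in auto)
    qed
  qed
  have F3: "lie_eq g 3 (Br ?c (Br ?a ?b)) Zero"
  proof (rule z_br_r)
    show "lie_eq g 3 (Br ?a ?b) Zero"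
    proof (cases "q = A k")
      case True show ?thesis unfolding True zg.simps by (rule rel_xx) (use k m in auto)
    next
      case False then have qB: "q = B k" using k by auto
      show ?thesis unfolding qB zg.simps by (rule br_zero_swap, rule rel_xy) (use k m in auto)
    qed
  qed
  show ?thesis
    apply (rule lc_eq[where R="Add (Add (Br ?a (Br ?b ?c)) (Add (Br ?b (Br ?c ?a)) (Br ?c (Br ?a ?b))))
        (Add (Smul (-1) (Br ?a (Sub (Br ?b ?c) (T 2 3)))) (Add (Smul (-1) (Br ?b (Br ?c ?a))) (Smul (-1) (Br ?c (Br ?a ?b)))))"])
     apply (rule z_add[OF lie_eq.jacobi z_add[OF z_smul[OF F1] z_add[OF z_smul[OF F2] z_smul[OF F3]]]])
    apply (simp add: Sub_def Neg_def)
    done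
qed

lemma lsum_single: "distinct L \<Longrightarrow> k \<in> set L \<Longrightarrow> (\<forall>l\<in>set L. l \<noteq> k \<longrightarrow> lie_eq g n (F l) Zero)
  \<Longrightarrow> lie_eq g n (lsum (map F L)) (F k)"
proof (induction L)
  case Nil then show ?case by simp
next
  case (Cons a L)
  show ?case
  proof (cases "a = k")
    case True
    then have "\<forall>l\<in>set L. lie_eq g n (F l) Zero" using Cons.prems by auto
    then have "lie_eq g n (lsum (map F L)) Zero"
      by (induction L) (auto intro: z_add lq_refl)
    then have "lie_eq g n (lsum (map F (a # L))) (Add (F k) Zero)" using True
      by (auto intro: lie_eq.cong_add lq_refl)
    then show ?thesis by (rule lq_trans[OF _ lie_eq.add_zero])
  next
    case False
    then have "lie_eq g n (lsum (map F (a # L))) (Add Zero (F k))" using Cons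
      by (auto intro!: lie_eq.cong_add)
    then show ?thesis by (rule lq_trans[OF _ zero_add])
  qed
qed

lemma perl: assumes q: "q \<in> cls_set g" and l: "l \<in> {1..g}"
  shows "lie_eq g 3 (Br (Gen (zg 1 q)) (Br (X l 2) (Y l 2)))
     (if Gen (zg 1 q) = X l 1 \<or> Gen (zg 1 q) = Y l 1 then Br (Gen (zg 2 q)) (T 1 2) else Zero)"
proof -
  obtain k where k: "k \<in> {1..g}" "q = A k \<or> q = B k" using q by (auto simp: cls_set_iff)
  let ?b = "X l 2" and ?c = "Y l 2"
  show ?thesis
  proof (cases "q = A k")
    case qA: True
    let ?a = "X k 1"
    have F2: "lie_eq g 3 (Br ?b (Add (Br ?c ?a) (Br ?a ?c))) Zero" by (rule z_br_r[OF br_anti0])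
    have F3: "lie_eq g 3 (Br ?c (Br ?a ?b)) Zero" by (rule z_br_r, rule rel_xx) (use k l in auto)
    show ?thesis
    proof (cases "l = k")
      case True
      have F2': "lie_eq g 3 (Br ?b (Sub (Br ?a (Y k 2)) (T 1 2))) Zero"
        by (rule z_br_r, rule rel_xyt) (use k l True in auto)
      show ?thesis using qA True
        apply -
        apply (rule lc_eq[where R="Add (Add (Br ?a (Br ?b ?c)) (Add (Br ?b (Br ?c ?a)) (Br ?c (Br ?a ?b))))
          (Add (Smul (-1) (Br ?b (Add (Br ?c ?a) (Br ?a ?c)))) (Add (Br ?b (Sub (Br ?a (Y k 2)) (T 1 2))) (Smul (-1) (Br ?c (Br ?a ?b)))))"])
         apply (rule z_add[OF lie_eq.jacobi z_add[OF z_smul[OF F2] z_add[OF F2' z_smul[OF F3]]]])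
        apply (simp add: Sub_def Neg_def)
        done
    next
      case False
      have G: "lie_eq g 3 (Br ?b (Br ?a ?c)) Zero"
        by (rule z_br_r, rule rel_xy) (use k l False in auto)
      show ?thesis using qA False
        apply -
        apply (rule lc_eq[where R="Add (Add (Br ?a (Br ?b ?c)) (Add (Br ?b (Br ?c ?a)) (Br ?c (Br ?a ?b))))
          (Add (Smul (-1) (Br ?b (Add (Br ?c ?a) (Br ?a ?c)))) (Add (Br ?b (Br ?a ?c)) (Smul (-1) (Br ?c (Br ?a ?b)))))"])
         apply (rule z_add[OF lie_eq.jacobi z_add[OF z_smul[OF F2] z_add[OF G z_smul[OF F3]]]])
        apply (simp add: Sub_def Neg_def)
        done
    qed
  next
    case False
    hence qB: "q = B k" using k by auto
    let ?a = "Y k 1"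
    have F2: "lie_eq g 3 (Br ?b (Br ?c ?a)) Zero" by (rule z_br_r, rule rel_yy) (use k l in auto)
    have F3: "lie_eq g 3 (Br ?c (Add (Br ?a ?b) (Br ?b ?a))) Zero" by (rule z_br_r[OF br_anti0])
    show ?thesis
    proof (cases "l = k")
      case True
      have F3': "lie_eq g 3 (Br ?c (Sub (Br (X k 2) ?a) (T 2 1))) Zero"
        by (rule z_br_r, rule rel_xyt) (use k l True in auto)
      have S: "lie_eq g 3 (Br (Y k 2) (Sub (T 2 1) (T 1 2))) Zero"
        by (rule z_br_r, rule rel_sym) auto
      show ?thesis using qB True
        apply -
        apply (rule lc_eq[where R="Add (Add (Br ?a (Br ?b ?c)) (Add (Br ?b (Br ?c ?a)) (Br ?c (Br ?a ?b))))
          (Add (Smul (-1) (Br ?b (Br ?c ?a))) (Add (Smul (-1) (Br ?c (Add (Br ?a ?b) (Br ?b ?a))))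
             (Add (Br ?c (Sub (Br (X k 2) ?a) (T 2 1))) (Br (Y k 2) (Sub (T 2 1) (T 1 2))))))"])
         apply (rule z_add[OF lie_eq.jacobi z_add[OF z_smul[OF F2] z_add[OF z_smul[OF F3] z_add[OF F3' S]]]])
        apply (simp add: Sub_def Neg_def)
        done
    next
      case False
      have G: "lie_eq g 3 (Br ?c (Br ?b ?a)) Zero"
        by (rule z_br_r, rule rel_xy) (use k l False in auto)
      show ?thesis using qB False
        apply -
        apply (rule lc_eq[where R="Add (Add (Br ?a (Br ?b ?c)) (Add (Br ?b (Br ?c ?a)) (Br ?c (Br ?a ?b))))
          (Add (Smul (-1) (Br ?b (Br ?c ?a))) (Add (Smul (-1) (Br ?c (Add (Br ?a ?b) (Br ?b ?a))))
             (Br ?c (Br ?b ?a))))"])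
         apply (rule z_add[OF lie_eq.jacobi z_add[OF z_smul[OF F2] z_add[OF z_smul[OF F3] G]]])
        apply (simp add: Sub_def Neg_def)
        done
    qed
  qed
qed

lemma filt2: "filter (\<lambda>j. j \<noteq> (2::nat)) [1..<3+1] = [1,3]"
  by (simp add: upt_rec)

lemma lemma_b: assumes g: "2 \<le> g" and q: "q \<in> cls_set g"
  shows "lie_eq g 3 (Br (T 1 2) (Gen (zg 2 q))) (Smul (-1) (Br (T 1 2) (Gen (zg 1 q))) :: 'k::field lie)"
proof -
  obtain k where k: "k \<in> {1..g}" "q = A k \<or> q = B k" using q by (auto simp: cls_set_iff)
  let ?a = "Gen (zg 1 q) :: 'k lie" and ?a2 = "Gen (zg 2 q) :: 'k lie"
  let ?S = "lsum (map (\<lambda>k. Br (X k 2) (Y k 2)) [1..<g+1]) :: 'k lie"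
  let ?c = "(2 - 2 * of_nat g) :: 'k"
  let ?rest = "Add (Add (T 2 1) (Add (T 2 3) Zero)) (Smul ?c (T 2 2)) :: 'k lie"
  have H0: "lie_eq g 3 (Br ?a (Add ?S ?rest)) Zero"
    using z_br_r[OF rel_sum[of 2 3 g], of ?a] unfolding filt2 by (simp only: list.map lsum_Cons lsum_Nil) simp
  have H1: "lie_eq g 3 (Br ?a (Add ?S ?rest)) (Add (Br ?a ?S) (Br ?a ?rest))" by (rule lie_eq.br_add_r)
  have H2: "lie_eq g 3 (Br ?a ?S) (Br ?a2 (T 1 2))"
  proof -
    let ?F = "\<lambda>l::nat. (if ?a = X l 1 \<or> ?a = Y l 1 then Br ?a2 (T 1 2) else Zero)"
    have "lie_eq g 3 (Br ?a ?S) (lsum (map (\<lambda>l. Br ?a (Br (X l 2) (Y l 2))) [1..<g+1]))"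
      using br_lsum_r[of g 3 ?a "map (\<lambda>k. Br (X k 2) (Y k 2)) [1..<g+1]"] by (simp add: comp_def)
    also have "lie_eq g 3 ... (lsum (map ?F [1..<g+1]))"
      by (rule lsum_cong, rule perl[OF q]) auto
    also have "lie_eq g 3 ... (?F k)"
      by (rule lsum_single) (use k in \<open>auto intro: lq_refl\<close>)
    also have "?F k = Br ?a2 (T 1 2)" using k by auto
    finally show ?thesis .
  qed
  have K: "lie_eq g 3 (Add (Br ?a2 (T 1 2)) (Br ?a ?rest)) Zero"
    by (rule lq_trans[OF lie_eq.cong_add[OF lq_sym[OF H2] lq_refl]], rule lq_trans[OF lq_sym[OF H1] H0])
  have Z1: "lie_eq g 3 (Br ?a (T 2 3)) Zero" by (rule lemma_a[OF g q])
  have Z2: "lie_eq g 3 (Br ?a (T 2 2)) Zero" by (rule br_zero_swap, rule rel_cent) (use q k in auto)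
  have S1: "lie_eq g 3 (Br ?a (Sub (T 2 1) (T 1 2))) Zero" by (rule z_br_r, rule rel_sym) auto
  show ?thesis
    apply (rule lc_eq[where R="Add (Add (Br (T 1 2) ?a2) (Br ?a2 (T 1 2)))
       (Add (Add (Br (T 1 2) ?a) (Br ?a (T 1 2)))
       (Add (Smul (-1) (Add (Br ?a2 (T 1 2)) (Br ?a ?rest)))
       (Add (Br ?a (Sub (T 2 1) (T 1 2))) (Add (Br ?a (T 2 3)) (Smul ?c (Br ?a (T 2 2)))))))"])
     apply (rule z_add[OF br_anti0 z_add[OF br_anti0 z_add[OF z_smul[OF K] z_add[OF S1 z_add[OF Z1 z_smul[OF Z2]]]]]])
    apply (simp add: Sub_def Neg_def)
    done
qed

lemma eq_neg_zero: "lie_eq g n x (Smul (-1) y) \<Longrightarrow> lie_eq g n (Add x y) Zero"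
  by (rule lq_trans[OF lie_eq.cong_add[OF _ lq_refl] lq_trans[OF lie_eq.add_comm lie_eq.add_neg]])

lemma s123_W: "sup_1_23 (W p q) = Add (Br (Add (Gen (zg 1 p)) Zero) (Add (Gen (zg 1 q)) Zero))
   (Smul (2 * of_int (pair p q)) (Add (Add (T 1 1) Zero) (Smul (1/2) Zero)))"
  by (simp add: W_def sup_1_23_def up_def preim_def upt_rec)

lemma s213_W: "sup_2_13 (W p q) = Add (Br (Add (Gen (zg 2 p)) Zero) (Add (Gen (zg 2 q)) Zero))
   (Smul (2 * of_int (pair p q)) (Add (Add (T 2 2) Zero) (Smul (1/2) Zero)))"
  by (simp add: W_def sup_2_13_def up_def preim_def upt_rec)

definition Df :: "cls \<Rightarrow> cls \<Rightarrow> cls \<Rightarrow> 'k::field lie" where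
  "Df p q r = Add (Smul (of_int (pair r p)) (Br (T 1 2) (Gen (zg 1 q)))) (Smul (- of_int (pair r q)) (Br (T 1 2) (Gen (zg 1 p))))"

lemma Dlem: assumes p: "p \<in> cls_set g" and q: "q \<in> cls_set g" and r: "r \<in> cls_set g"
  shows "lie_eq g 3 (Br (sup_1_23 (W p q)) (Gen (zg 2 r))) (Df p q r :: 'k::field lie)"
proof -
  let ?p = "Gen (zg 1 p) :: 'k lie" and ?q = "Gen (zg 1 q) :: 'k lie" and ?r = "Gen (zg 2 r) :: 'k lie"
  let ?kp = "of_int (pair r p) :: 'k" and ?kq = "of_int (pair r q) :: 'k" and ?c = "of_int (pair p q) :: 'k"
  have Ga: "lie_eq g 3 (Br (Sub (Br ?p ?r) (Smul ?kp (T 1 2))) ?q) Zero"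
    by (rule z_br_l, rule z_sub, rule G1) (use p r in auto)
  have Gb: "lie_eq g 3 (Br ?p (Sub (Br ?q ?r) (Smul ?kq (T 1 2)))) Zero"
    by (rule z_br_r, rule z_sub, rule G1) (use q r in auto)
  have F5: "lie_eq g 3 (Br (T 1 1) ?r) Zero" by (rule rel_cent) (use r in \<open>auto simp: cls_set_iff\<close>)
  show ?thesis unfolding s123_W Df_def
    apply (rule lc_eq[where R="Add (Add (Br (Br ?p ?q) ?r) (Br ?r (Br ?p ?q)))
      (Add (Smul (-1) (Add (Br ?p (Br ?q ?r)) (Add (Br ?q (Br ?r ?p)) (Br ?r (Br ?p ?q)))))
      (Add (Br ?p (Sub (Br ?q ?r) (Smul ?kq (T 1 2))))
      (Add (Smul ?kq (Add (Br ?p (T 1 2)) (Br (T 1 2) ?p)))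
      (Add (Br ?q (Add (Br ?r ?p) (Br ?p ?r)))
      (Add (Smul (-1) (Add (Br (Br ?p ?r) ?q) (Br ?q (Br ?p ?r))))
      (Add (Br (Sub (Br ?p ?r) (Smul ?kp (T 1 2))) ?q)
      (Smul (2 * ?c) (Br (T 1 1) ?r))))))))"])
     apply (rule z_add[OF br_anti0 z_add[OF z_smul[OF lie_eq.jacobi] z_add[OF Gb z_add[OF z_smul[OF br_anti0]
          z_add[OF z_br_r[OF br_anti0] z_add[OF z_smul[OF br_anti0] z_add[OF Ga z_smul[OF F5]]]]]]]])
    apply (simp add: Sub_def Neg_def algebra_simps)
    done
qed

definition Ef :: "cls \<Rightarrow> cls \<Rightarrow> cls \<Rightarrow> 'k::field lie" where
  "Ef p q r = Add (Smul (- of_int (pair r p)) (Br (T 1 2) (Gen (zg 1 q)))) (Smul (of_int (pair r q)) (Br (T 1 2) (Gen (zg 1 p))))"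

lemma Elem: assumes g: "2 \<le> g" and p: "p \<in> cls_set g" and q: "q \<in> cls_set g" and r: "r \<in> cls_set g"
  shows "lie_eq g 3 (Br (sup_2_13 (W p q)) (Gen (zg 1 r))) (Ef p q r :: 'k::field lie)"
proof -
  let ?p = "Gen (zg 2 p) :: 'k lie" and ?q = "Gen (zg 2 q) :: 'k lie" and ?r = "Gen (zg 1 r) :: 'k lie"
  let ?p1 = "Gen (zg 1 p) :: 'k lie" and ?q1 = "Gen (zg 1 q) :: 'k lie"
  let ?kp = "of_int (pair r p) :: 'k" and ?kq = "of_int (pair r q) :: 'k" and ?c = "of_int (pair p q) :: 'k"
  have Ga: "lie_eq g 3 (Br (Sub (Br ?p ?r) (Smul ?kp (T 1 2))) ?q) Zero"
    by (rule z_br_l, rule z_sub, rule G1') (use p r in auto)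
  have Gb: "lie_eq g 3 (Br ?p (Sub (Br ?q ?r) (Smul ?kq (T 1 2)))) Zero"
    by (rule z_br_r, rule z_sub, rule G1') (use q r in auto)
  have F5: "lie_eq g 3 (Br (T 2 2) ?r) Zero" by (rule rel_cent) (use r in \<open>auto simp: cls_set_iff\<close>)
  have Bp: "lie_eq g 3 (Add (Br (T 1 2) ?p) (Br (T 1 2) ?p1)) Zero" by (rule eq_neg_zero, rule lemma_b[OF g p])
  have Bq: "lie_eq g 3 (Add (Br (T 1 2) ?q) (Br (T 1 2) ?q1)) Zero" by (rule eq_neg_zero, rule lemma_b[OF g q])
  show ?thesis unfolding s213_W Ef_def
    apply (rule lc_eq[where R="Add (Add (Br (Br ?p ?q) ?r) (Br ?r (Br ?p ?q)))
      (Add (Smul (-1) (Add (Br ?p (Br ?q ?r)) (Add (Br ?q (Br ?r ?p)) (Br ?r (Br ?p ?q)))))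
      (Add (Br ?p (Sub (Br ?q ?r) (Smul ?kq (T 1 2))))
      (Add (Smul ?kq (Add (Br ?p (T 1 2)) (Br (T 1 2) ?p)))
      (Add (Br ?q (Add (Br ?r ?p) (Br ?p ?r)))
      (Add (Smul (-1) (Add (Br (Br ?p ?r) ?q) (Br ?q (Br ?p ?r))))
      (Add (Br (Sub (Br ?p ?r) (Smul ?kp (T 1 2))) ?q)
      (Add (Smul (2 * ?c) (Br (T 2 2) ?r))
      (Add (Smul ?kp (Add (Br (T 1 2) ?q) (Br (T 1 2) ?q1)))
      (Smul (- ?kq) (Add (Br (T 1 2) ?p) (Br (T 1 2) ?p1)))))))))))"])
     apply (rule z_add[OF br_anti0 z_add[OF z_smul[OF lie_eq.jacobi] z_add[OF Gb z_add[OF z_smul[OF br_anti0]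
          z_add[OF z_br_r[OF br_anti0] z_add[OF z_smul[OF br_anti0] z_add[OF Ga z_add[OF z_smul[OF F5]
          z_add[OF z_smul[OF Bq] z_smul[OF Bp]]]]]]]]]])
    apply (simp add: Sub_def Neg_def algebra_simps)
    done
qed

lemma pair_nz: "pair c x \<noteq> 0 \<Longrightarrow> c = dual x"
  by (cases c; cases x) (auto split: if_splits)

lemma pair_dual: "pair (dual x) x = - pair x (dual x)"
  by (cases x) auto

lemma dual_inj[simp]: "dual x = dual y \<longleftrightarrow> x = y"
  by (cases x; cases y) auto

lemma pair_dual_zero: "x \<noteq> y \<Longrightarrow> pair (dual x) y = 0"
  by (cases x; cases y) auto

lemma lin_1: "lie_eq g n (Add (Smul k x) (Add (Smul 0 y) (Smul 0 z))) (Smul k x)"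
  by (rule lq_trans[OF lie_eq.cong_add[OF lq_refl z_add[OF smul0 smul0]] lie_eq.add_zero])

lemma lin_2: "lie_eq g n (Add (Smul 0 x) (Add (Smul k y) (Smul 0 z))) (Smul k y)"
  by (rule lq_trans[OF lie_eq.cong_add[OF smul0 lq_trans[OF lie_eq.cong_add[OF lq_refl smul0] lie_eq.add_zero]] zero_add])

lemma lin_3: "lie_eq g n (Add (Smul 0 x) (Add (Smul 0 y) (Smul k z))) (Smul k z)"
  by (rule lq_trans[OF lie_eq.cong_add[OF smul0 lq_trans[OF lie_eq.cong_add[OF smul0 lq_refl] zero_add]] zero_add])

lemma lin_0: "lie_eq g n (Add (Smul 0 x) (Add (Smul 0 y) (Smul 0 z))) Zero"
  by (rule z_add[OF smul0 z_add[OF smul0 smul0]])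

lemma up_simps: "up m \<phi> (Smul c x) = Smul c (up m \<phi> x)" "up m \<phi> Zero = Zero"
  "up m \<phi> (Add x y) = Add (up m \<phi> x) (up m \<phi> y)" "up m \<phi> (Br x y) = Br (up m \<phi> x) (up m \<phi> y)"
  by (simp_all add: up_def)

lemma Vsum: assumes d: "distinct [\<alpha>, \<beta>, \<gamma>]"
  shows "lie_eq g n (up m \<phi> (V \<alpha> \<beta> \<gamma> c))
    (Add (Smul (of_int (pair c \<alpha>)) (up m \<phi> (W \<beta> \<gamma>)))
      (Add (Smul (- of_int (pair c \<beta>)) (up m \<phi> (W \<alpha> \<gamma>)))
           (Smul (of_int (pair c \<gamma>)) (up m \<phi> (W \<alpha> \<beta>)))) :: 'k::field lie)"
proof -
  have nz: "\<And>x. c \<noteq> dual x \<Longrightarrow> pair c x = 0" using pair_nz by blast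
  show ?thesis
  proof (cases "c = dual \<alpha>")
    case True
    then have "pair c \<beta> = 0" "pair c \<gamma> = 0" using d by (auto intro!: nz pair_dual_zero)
    then show ?thesis using True
      by (simp add: V_W up_simps pair_dual lq_sym[OF lin_1])
  next
    case F1: False
    show ?thesis
    proof (cases "c = dual \<beta>")
      case True
      then have "pair c \<alpha> = 0" "pair c \<gamma> = 0" using d F1 by (auto intro!: nz pair_dual_zero)
      then show ?thesis using True F1
        by (simp add: V_W up_simps pair_dual lq_sym[OF lin_2])
    next
      case F2: False
      show ?thesis
      proof (cases "c = dual \<gamma>")
        case True
        then have "pair c \<alpha> = 0" "pair c \<beta> = 0" using d F1 F2 by (auto intro!: nz pair_dual_zero)
        then show ?thesis using True F1 F2
          by (simp add: V_W up_simps pair_dual lq_sym[OF lin_3])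
      next
        case False
        then show ?thesis using F1 F2
          by (simp add: V_W up_simps nz lq_sym[OF lin_0])
      qed
    qed
  qed
qed

lemma lin3_br: "lie_eq g n (Br (Add (Smul a x) (Add (Smul b y) (Smul c z))) w)
   (Add (Smul a (Br x w)) (Add (Smul b (Br y w)) (Smul c (Br z w))))"
proof -
  have "lie_eq g n (Br (Add (Smul a x) (Add (Smul b y) (Smul c z))) w)
     (Add (Br (Smul a x) w) (Add (Br (Smul b y) w) (Br (Smul c z) w)))"
    by (rule lq_trans[OF lie_eq.br_add_l lie_eq.cong_add[OF lq_refl lie_eq.br_add_l]])
  also have "lie_eq g n ... (Add (Smul a (Br x w)) (Add (Smul b (Br y w)) (Smul c (Br z w))))"
    by (intro lie_eq.cong_add lie_eq.br_smul_l)
  finally show ?thesis .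
qed

lemma lin3_cong: "lie_eq g n x x' \<Longrightarrow> lie_eq g n y y' \<Longrightarrow> lie_eq g n z z' \<Longrightarrow>
  lie_eq g n (Add (Smul a x) (Add (Smul b y) (Smul c z))) (Add (Smul a x') (Add (Smul b y') (Smul c z')))"
  by (intro lie_eq.cong_add lie_eq.cong_smul)

lemma cond45: assumes g: "2 \<le> g" and d: "distinct [\<alpha>, \<beta>, \<gamma>]"
  and a: "\<alpha> \<in> cls_set g" and b: "\<beta> \<in> cls_set g" and c: "\<gamma> \<in> cls_set g"
  and r: "r \<in> cls_set g" and r': "r' \<in> cls_set g"
  shows "lie_eq g 3 (Sub (Br (sup_1_23 (V \<alpha> \<beta> \<gamma> r')) (Gen (zg 2 r)))
                        (Br (sup_2_13 (V \<alpha> \<beta> \<gamma> r)) (Gen (zg 1 r')))) (Zero :: 'k::field lie)"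
proof -
  have A: "lie_eq g 3 (Br (sup_1_23 (V \<alpha> \<beta> \<gamma> r')) (Gen (zg 2 r)))
    (Add (Smul (of_int (pair r' \<alpha>)) (Df \<beta> \<gamma> r))
      (Add (Smul (- of_int (pair r' \<beta>)) (Df \<alpha> \<gamma> r)) (Smul (of_int (pair r' \<gamma>)) (Df \<alpha> \<beta> r))) :: 'k lie)"
    unfolding sup_1_23_def
    by (rule lq_trans[OF lie_eq.cong_br[OF Vsum[OF d] lq_refl] lq_trans[OF lin3_br lin3_cong]])
       (rule Dlem[unfolded sup_1_23_def]; use a b c r in simp)+
  have B: "lie_eq g 3 (Br (sup_2_13 (V \<alpha> \<beta> \<gamma> r)) (Gen (zg 1 r')))
    (Add (Smul (of_int (pair r \<alpha>)) (Ef \<beta> \<gamma> r'))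
      (Add (Smul (- of_int (pair r \<beta>)) (Ef \<alpha> \<gamma> r')) (Smul (of_int (pair r \<gamma>)) (Ef \<alpha> \<beta> r'))) :: 'k lie)"
    unfolding sup_2_13_def
    by (rule lq_trans[OF lie_eq.cong_br[OF Vsum[OF d] lq_refl] lq_trans[OF lin3_br lin3_cong]])
       (rule Elem[unfolded sup_2_13_def]; use g a b c r' in simp)+
  show ?thesis
    unfolding Sub_def Neg_def
    apply (rule lq_trans[OF lie_eq.cong_add[OF A lie_eq.cong_smul[OF B]]])
    apply (rule lc_eq0)
    using d apply (simp add: Df_def Ef_def algebra_simps)
    done
qed

lemma pair_anti: "pair q p = - pair p q" by (cases p; cases q) auto

lemma s12_W: "sup_12 (W p q) = Add (Br (Add (Gen (zg 1 p)) (Add (Gen (zg 2 p)) Zero)) (Add (Gen (zg 1 q)) (Add (Gen (zg 2 q)) Zero)))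
  (Smul (2 * of_int (pair p q)) (Add (Add (T 1 1) (Add (T 2 2) Zero)) (Smul (1/2) (Add (T 1 2) (Add (T 2 1) Zero)))))"
  by (simp add: W_def sup_12_def up_def preim_def upt_rec)

lemma s1_2_W: "sup_1_2 (W p q) = Add (Br (Add (Gen (zg 1 p)) Zero) (Add (Gen (zg 1 q)) Zero))
   (Smul (2 * of_int (pair p q)) (Add (Add (T 1 1) Zero) (Smul (1/2) Zero)))"
  by (simp add: W_def sup_1_2_def up_def preim_def upt_rec)

lemma s2_1_W: "sup_2_1 (W p q) = Add (Br (Add (Gen (zg 2 p)) Zero) (Add (Gen (zg 2 q)) Zero))
   (Smul (2 * of_int (pair p q)) (Add (Add (T 2 2) Zero) (Smul (1/2) Zero)))"
  by (simp add: W_def sup_2_1_def up_def preim_def upt_rec)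

lemma WS: assumes n: "2 \<le> n" and p: "p \<in> cls_set g" and q: "q \<in> cls_set g" and pq: "p \<noteq> q"
  shows "lie_eq g n (sup_12 (W p q)) (Add (sup_1_2 (W p q)) (sup_2_1 (W p q)) :: 'k::field_char_0 lie)"
proof -
  let ?p1 = "Gen (zg 1 p) :: 'k lie" and ?q1 = "Gen (zg 1 q) :: 'k lie"
  let ?p2 = "Gen (zg 2 p) :: 'k lie" and ?q2 = "Gen (zg 2 q) :: 'k lie"
  let ?c = "of_int (pair p q) :: 'k" and ?k = "of_int (pair q p) :: 'k"
  have A: "lie_eq g n (Sub (Br ?p1 ?q2) (Smul ?k (T 1 2))) Zero" by (rule z_sub, rule G1[OF n p q])
  have B: "lie_eq g n (Sub (Br ?p2 ?q1) (Smul ?k (T 1 2))) Zero" by (rule z_sub, rule G1'[OF n p q])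
  have S: "lie_eq g n (Sub (T 2 1) (T 1 2)) Zero" by (rule rel_sym) (use n in auto)
  have e: "?k = - ?c" by (cases p; cases q) auto
  show ?thesis
    unfolding s12_W s1_2_W s2_1_W
    apply (rule lc_eq[where R="Add (Sub (Br ?p1 ?q2) (Smul ?k (T 1 2))) (Add (Sub (Br ?p2 ?q1) (Smul ?k (T 1 2))) (Smul ?c (Sub (T 2 1) (T 1 2))))"])
     apply (rule z_add[OF A z_add[OF B z_smul[OF S]]])
    using pq apply (simp add: Sub_def Neg_def e algebra_simps)
    done
qed

lemma s3_eq: "sup_12_3 (W p q) = sup_12 (W p q)" "sup_1_23 (W p q) = sup_1_2 (W p q)"
  "sup_2_13 (W p q) = sup_2_1 (W p q)"
  by (simp_all add: W_def sup_12_def sup_1_2_def sup_2_1_def sup_12_3_def sup_1_23_def sup_2_13_def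
     up_def preim_def upt_rec)

lemma lin3_split: "lie_eq g n x1 (Add y1 w1) \<Longrightarrow> lie_eq g n x2 (Add y2 w2) \<Longrightarrow> lie_eq g n x3 (Add y3 w3) \<Longrightarrow>
  lie_eq g n (Add (Smul a x1) (Add (Smul b x2) (Smul c x3)))
    (Add (Add (Smul a y1) (Add (Smul b y2) (Smul c y3))) (Add (Smul a w1) (Add (Smul b w2) (Smul c w3))))"
  apply (rule lq_trans[OF lin3_cong], assumption+)
  apply (rule lq_trans[OF lie_eq.cong_add[OF lie_eq.smul_add lie_eq.cong_add[OF lie_eq.smul_add lie_eq.smul_add]]])
  apply (rule lq_trans[OF lie_eq.cong_add[OF lq_refl add4]])
  apply (rule add4)
  done

lemma sub3: "lie_eq g n x (Add y z) \<Longrightarrow> lie_eq g n (Sub (Sub x y) z) Zero"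
proof -
  assume h: "lie_eq g n x (Add y z)"
  have "lie_eq g n (Sub (Sub x y) z) (Add (Add (Add z y) (Smul (-1) y)) (Smul (-1) z))"
    unfolding Sub_def Neg_def by (intro lie_eq.cong_add lq_refl lq_trans[OF h lie_eq.add_comm])
  also have "lie_eq g n ... (Add (Add z (Add y (Smul (-1) y))) (Smul (-1) z))"
    by (intro lie_eq.cong_add lq_refl lie_eq.add_assoc)
  also have "lie_eq g n ... (Add (Add z Zero) (Smul (-1) z))"
    by (intro lie_eq.cong_add lq_refl lie_eq.add_neg)
  also have "lie_eq g n ... (Add z (Smul (-1) z))"
    by (intro lie_eq.cong_add lq_refl lie_eq.add_zero)
  also have "lie_eq g n ... Zero" by (rule lie_eq.add_neg)
  finally show ?thesis .
qed

lemma cond2: assumes d: "distinct [\<alpha>, \<beta>, \<gamma>]"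
  and a: "\<alpha> \<in> cls_set g" and b: "\<beta> \<in> cls_set g" and c: "\<gamma> \<in> cls_set g"
  shows "lie_eq g 2 (sup_12 (V \<alpha> \<beta> \<gamma> r)) (Add (sup_1_2 (V \<alpha> \<beta> \<gamma> r)) (sup_2_1 (V \<alpha> \<beta> \<gamma> r)) :: 'k::field_char_0 lie)"
  unfolding sup_12_def sup_1_2_def sup_2_1_def
  apply (rule lq_trans[OF Vsum[OF d]])
  apply (rule lq_trans[OF _ lie_eq.cong_add[OF lq_sym[OF Vsum[OF d]] lq_sym[OF Vsum[OF d]]]])
  apply (rule lin3_split; rule WS[unfolded sup_12_def sup_1_2_def sup_2_1_def]; use a b c d in simp)
  done

lemma cond3: assumes d: "distinct [\<alpha>, \<beta>, \<gamma>]"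
  and a: "\<alpha> \<in> cls_set g" and b: "\<beta> \<in> cls_set g" and c: "\<gamma> \<in> cls_set g"
  shows "lie_eq g 3 (Sub (Sub (sup_12_3 (V \<alpha> \<beta> \<gamma> r)) (sup_1_23 (V \<alpha> \<beta> \<gamma> r))) (sup_2_13 (V \<alpha> \<beta> \<gamma> r))) (Zero :: 'k::field_char_0 lie)"
proof (rule sub3)
  have WS3: "lie_eq g 3 (sup_12_3 (W p q)) (Add (sup_1_23 (W p q)) (sup_2_13 (W p q)) :: 'k lie)"
    if "p \<in> cls_set g" "q \<in> cls_set g" "p \<noteq> q" for p q
    unfolding s3_eq by (rule WS) (use that in auto)
  show "lie_eq g 3 (sup_12_3 (V \<alpha> \<beta> \<gamma> r)) (Add (sup_1_23 (V \<alpha> \<beta> \<gamma> r)) (sup_2_13 (V \<alpha> \<beta> \<gamma> r)) :: 'k lie)"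
    unfolding sup_12_3_def sup_1_23_def sup_2_13_def
    apply (rule lq_trans[OF Vsum[OF d]])
    apply (rule lq_trans[OF _ lie_eq.cong_add[OF lq_sym[OF Vsum[OF d]] lq_sym[OF Vsum[OF d]]]])
    apply (rule lin3_split; rule WS3[unfolded sup_12_3_def sup_1_23_def sup_2_13_def]; use a b c d in simp)
    done
qed

definition Jf :: "cls \<Rightarrow> cls \<Rightarrow> cls \<Rightarrow> 'k::field lie" where
  "Jf p q x = Br (Br (Gen (zg 1 p)) (Gen (zg 1 q))) (Gen (zg 1 x))"

definition Qf :: "cls \<Rightarrow> cls \<Rightarrow> cls \<Rightarrow> nat \<Rightarrow> 'k::field lie" where
  "Qf p q x i = Sub (Smul (of_int (pair (A i) x)) (Jf p q (B i))) (Smul (of_int (pair (B i) x)) (Jf p q (A i)))"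

lemma cls_valid: "x \<in> cls_set g \<Longrightarrow> (case x of A i \<Rightarrow> i \<in> {1..g} | B i \<Rightarrow> i \<in> {1..g})"
  by (auto simp: cls_set_def)

lemma Jlem: assumes x: "x \<in> cls_set g"
  shows "lie_eq g 3 (Br (sup_1_23 (W p q)) (Gen (zg 1 x))) (Jf p q x :: 'k::field lie)"
proof -
  have F: "lie_eq g 3 (Br (T 1 1) (Gen (zg 1 x))) (Zero :: 'k lie)"
    by (rule rel_cent) (use cls_valid[OF x] in auto)
  show ?thesis unfolding s123_W Jf_def
    apply (rule lc_eq[where R="Smul (2 * of_int (pair p q)) (Br (T 1 1) (Gen (zg 1 x)))"])
     apply (rule z_smul[OF F])
    apply (simp add: algebra_simps)
    done
qed

lemma summand: assumes d: "distinct [\<alpha>, \<beta>, \<gamma>]" and i: "i \<in> {1..g}"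
  shows "lie_eq g 3 (Sub (Br (sup_1_23 (V \<alpha> \<beta> \<gamma> (A i))) (Gen (zg 1 (B i))))
                        (Br (sup_1_23 (V \<alpha> \<beta> \<gamma> (B i))) (Gen (zg 1 (A i)))))
     (Add (Qf \<beta> \<gamma> \<alpha> i) (Add (Smul (-1) (Qf \<alpha> \<gamma> \<beta> i)) (Qf \<alpha> \<beta> \<gamma> i)) :: 'k::field lie)"
proof -
  have Ai: "A i \<in> cls_set g" and Bi: "B i \<in> cls_set g" using i by (auto simp: cls_set_def)
  have A: "lie_eq g 3 (Br (sup_1_23 (V \<alpha> \<beta> \<gamma> (A i))) (Gen (zg 1 (B i))))
    (Add (Smul (of_int (pair (A i) \<alpha>)) (Jf \<beta> \<gamma> (B i)))
      (Add (Smul (- of_int (pair (A i) \<beta>)) (Jf \<alpha> \<gamma> (B i))) (Smul (of_int (pair (A i) \<gamma>)) (Jf \<alpha> \<beta> (B i)))) :: 'k lie)"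
    unfolding sup_1_23_def
    by (rule lq_trans[OF lie_eq.cong_br[OF Vsum[OF d] lq_refl] lq_trans[OF lin3_br lin3_cong]])
       (rule Jlem[unfolded sup_1_23_def, OF Bi])+
  have B: "lie_eq g 3 (Br (sup_1_23 (V \<alpha> \<beta> \<gamma> (B i))) (Gen (zg 1 (A i))))
    (Add (Smul (of_int (pair (B i) \<alpha>)) (Jf \<beta> \<gamma> (A i)))
      (Add (Smul (- of_int (pair (B i) \<beta>)) (Jf \<alpha> \<gamma> (A i))) (Smul (of_int (pair (B i) \<gamma>)) (Jf \<alpha> \<beta> (A i)))) :: 'k lie)"
    unfolding sup_1_23_def
    by (rule lq_trans[OF lie_eq.cong_br[OF Vsum[OF d] lq_refl] lq_trans[OF lin3_br lin3_cong]])
       (rule Jlem[unfolded sup_1_23_def, OF Ai])+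
  show ?thesis
    unfolding Sub_def[of "Br _ _"] Neg_def
    apply (rule lq_trans[OF lie_eq.cong_add[OF A lie_eq.cong_smul[OF B]]])
    apply (rule lc_eq0)
    using d apply (simp add: Jf_def Qf_def Sub_def Neg_def algebra_simps del: zg.simps)
    done
qed

lemma lsum_add: "lie_eq g n (lsum (map (\<lambda>i. Add (f i) (h i)) L)) (Add (lsum (map f L)) (lsum (map h L)))"
proof (induction L)
  case Nil then show ?case by (simp add: lq_sym[OF lie_eq.add_zero])
next
  case (Cons a L)
  then show ?case by (simp add: lq_trans[OF lie_eq.cong_add[OF lq_refl Cons] add4])
qed

lemma lsum_smul: "lie_eq g n (lsum (map (\<lambda>i. Smul c (f i)) L)) (Smul c (lsum (map f L)))"
proof (induction L)
  case Nil then show ?case by (simp add: lq_sym[OF smul_Zero])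
next
  case (Cons a L)
  then show ?case by (simp add: lq_trans[OF lie_eq.cong_add[OF lq_refl Cons] lq_sym[OF lie_eq.smul_add]])
qed

lemma Qsum: assumes x: "x \<in> cls_set g"
  shows "lie_eq g n (lsum (map (Qf p q x) [1..<g+1])) (Smul (-1) (Jf p q x) :: 'k::field lie)"
proof -
  obtain k where k: "k \<in> {1..g}" "x = A k \<or> x = B k" using x by (auto simp: cls_set_iff)
  have "lie_eq g n (lsum (map (Qf p q x) [1..<g+1])) (Qf p q x k :: 'k lie)"
  proof (rule lsum_single)
    show "\<forall>l\<in>set [1..<g + 1]. l \<noteq> k \<longrightarrow> lie_eq g n (Qf p q x l) (Zero :: 'k lie)"
    proof (intro ballI impI)
      fix l assume "l \<noteq> k"
      then have "pair (A l) x = 0" "pair (B l) x = 0" using k by auto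
      then show "lie_eq g n (Qf p q x l) (Zero :: 'k lie)"
        unfolding Qf_def Sub_def Neg_def by (simp add: z_add smul0 z_smul)
    qed
  qed (use k in auto)
  also have "lie_eq g n ... (Smul (-1) (Jf p q x))"
    using k by (auto simp: Qf_def Sub_def Neg_def Jf_def intro!: lc_eq0)
  finally show ?thesis .
qed

lemma cond6: assumes g: "2 \<le> g" and d: "distinct [\<alpha>, \<beta>, \<gamma>]"
  and a: "\<alpha> \<in> cls_set g" and b: "\<beta> \<in> cls_set g" and c: "\<gamma> \<in> cls_set g"
  shows "lie_eq g 3 (lsum (map (\<lambda>i. Sub (Br (sup_1_23 (V \<alpha> \<beta> \<gamma> (A i))) (Y i 1))
                                      (Br (sup_1_23 (V \<alpha> \<beta> \<gamma> (B i))) (X i 1))) [1..<g+1])) (Zero :: 'k::field lie)"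
proof -
  let ?L = "[1..<g+1]"
  have "lie_eq g 3 (lsum (map (\<lambda>i. Sub (Br (sup_1_23 (V \<alpha> \<beta> \<gamma> (A i))) (Y i 1))
                                      (Br (sup_1_23 (V \<alpha> \<beta> \<gamma> (B i))) (X i 1))) ?L))
     (lsum (map (\<lambda>i. Add (Qf \<beta> \<gamma> \<alpha> i) (Add (Smul (-1) (Qf \<alpha> \<gamma> \<beta> i)) (Qf \<alpha> \<beta> \<gamma> i))) ?L) :: 'k lie)"
    by (rule lsum_cong) (use summand[OF d] in auto)
  also have "lie_eq g 3 ... (Add (lsum (map (Qf \<beta> \<gamma> \<alpha>) ?L))
      (Add (Smul (-1) (lsum (map (Qf \<alpha> \<gamma> \<beta>) ?L))) (lsum (map (Qf \<alpha> \<beta> \<gamma>) ?L))))"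
    by (rule lq_trans[OF lsum_add lie_eq.cong_add[OF lq_refl lq_trans[OF lsum_add lie_eq.cong_add[OF lsum_smul lq_refl]]]])
  also have "lie_eq g 3 ... (Add (Smul (-1) (Jf \<beta> \<gamma> \<alpha>))
      (Add (Smul (-1) (Smul (-1) (Jf \<alpha> \<gamma> \<beta>))) (Smul (-1) (Jf \<alpha> \<beta> \<gamma>))))"
    by (intro lie_eq.cong_add lie_eq.cong_smul Qsum a b c)
  also have "lie_eq g 3 ... Zero"
  proof -
    let ?a = "Gen (zg 1 \<alpha>) :: 'k lie" and ?b = "Gen (zg 1 \<beta>) :: 'k lie" and ?c = "Gen (zg 1 \<gamma>) :: 'k lie"
    show ?thesis unfolding Jf_def
      apply (rule lc_eq[where R="Add (Add (Br ?a (Br ?b ?c)) (Add (Br ?b (Br ?c ?a)) (Br ?c (Br ?a ?b))))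
         (Add (Smul (-1) (Add (Br (Br ?b ?c) ?a) (Br ?a (Br ?b ?c))))
         (Add (Smul (-1) (Add (Br (Br ?a ?b) ?c) (Br ?c (Br ?a ?b))))
         (Add (Add (Br (Br ?a ?c) ?b) (Br ?b (Br ?a ?c)))
         (Smul (-1) (Br ?b (Add (Br ?c ?a) (Br ?a ?c)))))))"])
       apply (rule z_add[OF lie_eq.jacobi z_add[OF z_smul[OF br_anti0] z_add[OF z_smul[OF br_anti0] z_add[OF br_anti0 z_smul[OF z_br_r[OF br_anti0]]]]]])
      using d apply simp
      done
  qed
  finally show ?thesis .
qed

lemma valid_zg1: "p \<in> cls_set g \<Longrightarrow> 1 \<le> n \<Longrightarrow> valid_gen g n (zg 1 p)"
  by (cases p) (auto simp: cls_set_def)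

lemma gens_W: "gens (W p q) = {zg 1 p, zg 1 q, Tg 1 1}"
  by (auto simp: W_def)

lemma wfV: assumes n: "1 \<le> n" and a: "\<alpha> \<in> cls_set g" and b: "\<beta> \<in> cls_set g" and c: "\<gamma> \<in> cls_set g"
  shows "wf g n (V \<alpha> \<beta> \<gamma> r)"
  unfolding wf_def V_W using valid_zg1[OF a n] valid_zg1[OF b n] valid_zg1[OF c n] n
  by (auto simp: gens_W)

theorem lemma11p10:
  fixes g :: nat and \<alpha> \<beta> \<gamma> :: cls
  assumes "g \<ge> 2"
    and "\<alpha> \<in> cls_set g" and "\<beta> \<in> cls_set g" and "\<gamma> \<in> cls_set g"
    and "distinct [\<alpha>, \<beta>, \<gamma>]"
  shows "in_Z g (V \<alpha> \<beta> \<gamma> :: cls \<Rightarrow> 'k::field_char_0 lie)"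
proof -
  note g = assms(1) and a = assms(2) and b = assms(3) and c = assms(4) and d = assms(5)
  have h1: "\<forall>r\<in>cls_set g. wf g 2 (V \<alpha> \<beta> \<gamma> r :: 'k lie)"
    by (intro ballI wfV[OF _ a b c]) simp
  have h2: "\<forall>r\<in>cls_set g. \<exists>u. wf g 1 u \<and>
        lie_eq g 2 (sup_12 u) (Add (sup_1_2 (V \<alpha> \<beta> \<gamma> r)) (sup_2_1 (V \<alpha> \<beta> \<gamma> r :: 'k lie)))"
  proof
    fix r assume r: "r \<in> cls_set g"
    show "\<exists>u. wf g 1 u \<and> lie_eq g 2 (sup_12 u) (Add (sup_1_2 (V \<alpha> \<beta> \<gamma> r)) (sup_2_1 (V \<alpha> \<beta> \<gamma> r :: 'k lie)))"
      by (rule exI[of _ "V \<alpha> \<beta> \<gamma> r"], rule conjI[OF wfV[OF _ a b c] cond2[OF d a b c]]) simp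
  qed
  have h3: "\<forall>r\<in>cls_set g. lie_zero g 3
        (Sub (Sub (sup_12_3 (V \<alpha> \<beta> \<gamma> r)) (sup_1_23 (V \<alpha> \<beta> \<gamma> r))) (sup_2_13 (V \<alpha> \<beta> \<gamma> r :: 'k lie)))"
    using cond3[OF d a b c] by auto
  have AB: "A i \<in> cls_set g" "B i \<in> cls_set g" if "i \<in> {1..g}" for i
    using that by (auto simp: cls_set_def)
  have h4: "\<forall>i\<in>{1..g}. \<forall>j\<in>{1..g}. lie_zero g 3
        (Sub (Br (sup_1_23 (V \<alpha> \<beta> \<gamma> (A i))) (Y j 2)) (Br (sup_2_13 (V \<alpha> \<beta> \<gamma> (B j) :: 'k lie)) (X i 1)))"
    using cond45[OF g d a b c AB(2) AB(1)] by (simp only: zg.simps) blast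
  have h5: "\<forall>i\<in>{1..g}. \<forall>j\<in>{1..g}. i < j \<longrightarrow>
        lie_zero g 3 (Sub (Br (sup_1_23 (V \<alpha> \<beta> \<gamma> (A i))) (X j 2)) (Br (sup_2_13 (V \<alpha> \<beta> \<gamma> (A j) :: 'k lie)) (X i 1)))
      \<and> lie_zero g 3 (Sub (Br (sup_1_23 (V \<alpha> \<beta> \<gamma> (B i))) (Y j 2)) (Br (sup_2_13 (V \<alpha> \<beta> \<gamma> (B j) :: 'k lie)) (Y i 1)))"
    using cond45[OF g d a b c AB(1) AB(1)] cond45[OF g d a b c AB(2) AB(2)] by (simp only: zg.simps) blast
  have h6: "lie_zero g 3 (lsum (map (\<lambda>i. Sub (Br (sup_1_23 (V \<alpha> \<beta> \<gamma> (A i))) (Y i 1))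
                                      (Br (sup_1_23 (V \<alpha> \<beta> \<gamma> (B i) :: 'k lie)) (X i 1))) [1..<g+1]))"
    by (rule cond6[OF g d a b c])
  show ?thesis unfolding in_Z_def using h1 h2 h3 h4 h5 h6 by blast
qed


end
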